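(* Let $(N,J,h)$ be a 2-dimensional almost Norden manifold of constant sectional curvature $k'$ and let $(S^1(N),\varphi,\xi,\eta,g)$ be its $S^1$-solvable extension (constructed as in the context). Then for $(S^1(N),\varphi,\xi,\eta,g)$: (1) the sectional curvatures of the $\xi$-sections are constant; (2) $\tau^*=0$; (3) $\tau^{**}=\tau-4$.
   Context: An almost Norden manifold $(N,J,h)$ is a manifold $N$ with an almost complex structure $J$ and a pseudo-Riemannian metric $h$ satisfying $h(Jx,Jy)=-h(x,y)$; $\widetilde{h}(x,y)=h(x,Jy)$; constant sectional curvature $k'$ means its curvature tensor is $R'(x,y,z,w)=k'\{h(y,z)h(x,w)-h(x,z)h(y,w)\}$. The $S^1$-solvable extension is $S^1(N)=\mathbb{R}^+\times N$, $t$ the coordinate on $\mathbb{R}^+=(0,\infty)$, with $\xi=\tfrac{\mathrm{d}}{\mathrm{d}t}$, $\eta=\mathrm{d}t$, $\varphi=J$ on vectors tangent to $N$, $\varphi\xi=0$, and metric $g=\mathrm{d}t^2+\cos2t\,h-\sin2t\,\widetilde{h}$. With $\nabla$ the Levi-Civita connection of $g$, $R(x,y)=\nabla_x\nabla_y-\nabla_y\nabla_x-\nabla_{[x,y]}$, $R(x,y,z,w)=g(R(x,y)z,w)$, and for a basis $\{e_i\}$ with $(g^{ij})$ the inverse of $(g(e_i,e_j))$ (summation convention): $\rho(y,z)=g^{ij}R(e_i,y,z,e_j)$, $\rho^*(y,z)=g^{ij}R(e_i,y,z,\varphi e_j)$, $\tau=g^{ij}\rho(e_i,e_j)$, $\tau^*=g^{ij}\rho^*(e_i,e_j)$,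 $\tau^{**}=g^{ij}\rho^*(e_i,\varphi e_j)$. The sectional curvature of a non-degenerate 2-plane $\alpha$ with orthogonal basis $\{x,y\}$ is $R(x,y,y,x)/(g(x,x)g(y,y))$; $\alpha$ is a $\xi$-section if $\xi\in\alpha$. *)

theory Defs
  imports "HOL-Analysis.Analysis"
begin

text \<open>A metric is a matrix field G x (G x $ i $ j = g(e_i,e_j)); a (1,1)-tensor is a matrix
  field P x with P x *v v the image of v.\<close>

definition pd :: "'n::finite \<Rightarrow> (real^'n \<Rightarrow> real) \<Rightarrow> real^'n \<Rightarrow> real" where
  "pd i f x = frechet_derivative f (at x) (axis i 1)"

fun Ck :: "nat \<Rightarrow> (real^'n::finite) set \<Rightarrow> (real^'n \<Rightarrow> real) \<Rightarrow> bool" where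
  "Ck 0 U f = continuous_on U f"
| "Ck (Suc k) U f = (continuous_on U f \<and> (\<forall>x\<in>U. f differentiable (at x)) \<and> (\<forall>i. Ck k U (pd i f)))"

definition smooth_fun :: "(real^'n::finite) set \<Rightarrow> (real^'n \<Rightarrow> real) \<Rightarrow> bool" where
  "smooth_fun U f = (\<forall>k. Ck k U f)"

definition gv :: "(real^'n \<Rightarrow> real^'n^'n) \<Rightarrow> real^'n \<Rightarrow> real^'n \<Rightarrow> real^'n \<Rightarrow> real"
  where "gv G x X Y = (\<Sum>i\<in>UNIV. \<Sum>j\<in>UNIV. X$i * G x $ i $ j * Y$j)"

definition ginv :: "(real^'n \<Rightarrow> real^'n^'n) \<Rightarrow> real^'n \<Rightarrow> real^'n^'n::finite"
  where "ginv G x = matrix_inv (G x)"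

text \<open>Christoffel symbols of the Levi-Civita connection: \<nabla>_{e_i} e_j = Gam k i j e_k.\<close>
definition Gam :: "(real^'n \<Rightarrow> real^'n^'n) \<Rightarrow> 'n::finite \<Rightarrow> 'n \<Rightarrow> 'n \<Rightarrow> real^'n \<Rightarrow> real" where
  "Gam G k i j x = (1/2) * (\<Sum>l\<in>UNIV. ginv G x $ k $ l *
      (pd i (\<lambda>y. G y $ j $ l) x + pd j (\<lambda>y. G y $ i $ l) x - pd l (\<lambda>y. G y $ i $ j) x))"

text \<open>R(e_i,e_j)e_k = Rup l i j k e_l with R(X,Y) = \<nabla>_X\<nabla>_Y - \<nabla>_Y\<nabla>_X - \<nabla>_[X,Y].\<close>
definition Rup :: "(real^'n \<Rightarrow> real^'n^'n) \<Rightarrow> 'n::finite \<Rightarrow> 'n \<Rightarrow> 'n \<Rightarrow> 'n \<Rightarrow> real^'n \<Rightarrow> real" where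
  "Rup G l i j k x = pd i (Gam G l j k) x - pd j (Gam G l i k) x
     + (\<Sum>m\<in>UNIV. Gam G l i m x * Gam G m j k x - Gam G l j m x * Gam G m i k x)"

text \<open>R(X,Y,Z,W) = g(R(X,Y)Z,W).\<close>
definition R4 :: "(real^'n \<Rightarrow> real^'n^'n) \<Rightarrow> real^'n \<Rightarrow> real^'n \<Rightarrow> real^'n \<Rightarrow> real^'n \<Rightarrow> real^'n::finite \<Rightarrow> real" where
  "R4 G x X Y Z W = (\<Sum>i\<in>UNIV. \<Sum>j\<in>UNIV. \<Sum>k\<in>UNIV. \<Sum>l\<in>UNIV. \<Sum>w\<in>UNIV.
      X$i * Y$j * Z$k * W$w * G x $ l $ w * Rup G l i j k x)"

definition rho :: "(real^'n \<Rightarrow> real^'n^'n) \<Rightarrow> real^'n \<Rightarrow> real^'n \<Rightarrow> real^'n::finite \<Rightarrow> real" where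
  "rho G x Y Z = (\<Sum>i\<in>UNIV. \<Sum>j\<in>UNIV. ginv G x $ i $ j * R4 G x (axis i 1) Y Z (axis j 1))"

definition rhostar :: "(real^'n \<Rightarrow> real^'n^'n) \<Rightarrow> (real^'n \<Rightarrow> real^'n^'n) \<Rightarrow> real^'n \<Rightarrow> real^'n \<Rightarrow> real^'n::finite \<Rightarrow> real" where
  "rhostar G P x Y Z = (\<Sum>i\<in>UNIV. \<Sum>j\<in>UNIV. ginv G x $ i $ j * R4 G x (axis i 1) Y Z (P x *v axis j 1))"

definition tau :: "(real^'n \<Rightarrow> real^'n^'n) \<Rightarrow> real^'n::finite \<Rightarrow> real" where
  "tau G x = (\<Sum>i\<in>UNIV. \<Sum>j\<in>UNIV. ginv G x $ i $ j * rho G x (axis i 1) (axis j 1))"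

definition taustar :: "(real^'n \<Rightarrow> real^'n^'n) \<Rightarrow> (real^'n \<Rightarrow> real^'n^'n) \<Rightarrow> real^'n::finite \<Rightarrow> real" where
  "taustar G P x = (\<Sum>i\<in>UNIV. \<Sum>j\<in>UNIV. ginv G x $ i $ j * rhostar G P x (axis i 1) (axis j 1))"

definition taustarstar :: "(real^'n \<Rightarrow> real^'n^'n) \<Rightarrow> (real^'n \<Rightarrow> real^'n^'n) \<Rightarrow> real^'n::finite \<Rightarrow> real" where
  "taustarstar G P x = (\<Sum>i\<in>UNIV. \<Sum>j\<in>UNIV. ginv G x $ i $ j * rhostar G P x (axis i 1) (P x *v axis j 1))"

definition almost_norden :: "(real^'n::finite) set \<Rightarrow> (real^'n \<Rightarrow> real^'n^'n) \<Rightarrow> (real^'n \<Rightarrow> real^'n^'n) \<Rightarrow> bool" where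
  "almost_norden U J h \<longleftrightarrow> open U \<and>
     (\<forall>i j. smooth_fun U (\<lambda>p. h p $ i $ j) \<and> smooth_fun U (\<lambda>p. J p $ i $ j)) \<and>
     (\<forall>p\<in>U. transpose (h p) = h p \<and> det (h p) \<noteq> 0 \<and>
             J p ** J p = - mat 1 \<and>
             (\<forall>X Y. gv h p (J p *v X) (J p *v Y) = - gv h p X Y))"

definition const_sec_curv :: "(real^'n::finite) set \<Rightarrow> (real^'n \<Rightarrow> real^'n^'n) \<Rightarrow> real \<Rightarrow> bool" where
  "const_sec_curv U h k' \<longleftrightarrow> (\<forall>p\<in>U. \<forall>X Y Z W.
      R4 h p X Y Z W = k' * (gv h p Y Z * gv h p X W - gv h p X Z * gv h p Y W))"

text \<open>The S^1-solvable extension on (0,\<infinity>) \<times> U \<subseteq> real^('n option); coordinate None is t.\<close>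
definition tco :: "real^('n::finite option) \<Rightarrow> real" where "tco x = x $ None"
definition pco :: "real^('n::finite option) \<Rightarrow> real^'n" where "pco x = (\<chi> i. x $ Some i)"

definition ext_dom :: "(real^'n::finite) set \<Rightarrow> (real^('n option)) set" where
  "ext_dom U = {x. 0 < tco x \<and> pco x \<in> U}"

definition htilde :: "(real^'n \<Rightarrow> real^'n^'n) \<Rightarrow> (real^'n \<Rightarrow> real^'n^'n) \<Rightarrow> real^'n \<Rightarrow> real^'n^'n::finite" where
  "htilde J h p = h p ** J p"

definition ext_metric :: "(real^'n \<Rightarrow> real^'n^'n) \<Rightarrow> (real^'n \<Rightarrow> real^'n^'n) \<Rightarrow> real^('n::finite option) \<Rightarrow> real^('n option)^('n option)" where
  "ext_metric J h x = (\<chi> a b. case (a, b) of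
       (None, None) \<Rightarrow> 1
     | (Some i, Some j) \<Rightarrow> cos (2 * tco x) * h (pco x) $ i $ j - sin (2 * tco x) * htilde J h (pco x) $ i $ j
     | _ \<Rightarrow> 0)"

definition ext_phi :: "(real^'n \<Rightarrow> real^'n^'n) \<Rightarrow> real^('n::finite option) \<Rightarrow> real^('n option)^('n option)" where
  "ext_phi J x = (\<chi> a b. case (a, b) of (Some i, Some j) \<Rightarrow> J (pco x) $ i $ j | _ \<Rightarrow> 0)"

definition ext_xi :: "real^('n::finite option)" where "ext_xi = axis None 1"

end

theory Submission
  imports Defs
begin

lemma pd_has: "(f has_derivative f') (at x) \<Longrightarrow> pd i f x = f' (axis i 1)"
  unfolding pd_def using frechet_derivative_at by metis

lemma pd_local:
  assumes "open S" "x \<in> S" "\<And>y. y \<in> S \<Longrightarrow> f y = g y"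
  shows "pd i f x = pd i g x"
proof -
  have "\<And>D. (f has_derivative D) (at x) \<longleftrightarrow> (g has_derivative D) (at x)"
    using has_derivative_transform_within_open[OF _ assms(1,2)] assms(3) by metis
  then have "frechet_derivative f (at x) = frechet_derivative g (at x)"
    unfolding frechet_derivative_def by simp
  then show ?thesis unfolding pd_def by simp
qed

lemma diff_local:
  assumes "open S" "x \<in> S" "\<And>y. y \<in> S \<Longrightarrow> f y = g y" "f differentiable (at x)"
  shows "g differentiable (at x)"
  using has_derivative_transform_within_open[OF _ assms(1,2)] assms(3,4)
  unfolding differentiable_def by metis

lemma line_deriv:
  fixes f :: "'a::real_normed_vector \<Rightarrow> real"
  assumes "f differentiable (at (p + s *\<^sub>R v))"
  shows "((\<lambda>s. f (p + s *\<^sub>R v)) has_derivative (\<lambda>d. d * frechet_derivative f (at (p + s *\<^sub>R v)) v)) (at s within T)"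
proof -
  let ?D = "frechet_derivative f (at (p + s *\<^sub>R v))"
  have 1: "((\<lambda>s. p + s *\<^sub>R v) has_derivative (\<lambda>d. d *\<^sub>R v)) (at s within T)"
    by (auto intro!: derivative_eq_intros)
  have 2: "(f has_derivative ?D) (at (p + s *\<^sub>R v))"
    using assms frechet_derivative_works by blast
  have lin: "linear ?D" using 2 has_derivative_linear by blast
  have "((\<lambda>s. f (p + s *\<^sub>R v)) has_derivative (\<lambda>d. ?D (d *\<^sub>R v))) (at s within T)"
    using has_derivative_compose[OF 1 2] by (simp add: o_def)
  moreover have "\<And>d. ?D (d *\<^sub>R v) = d * ?D v" using linear_scale[OF lin] by simp
  ultimately show ?thesis by simp
qed

lemma schwarz_aux:
  fixes f :: "real^'m::finite \<Rightarrow> real"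
  assumes S: "open S" "x \<in> S" and df: "\<forall>y\<in>S. f differentiable (at y)"
    and di: "pd i f differentiable (at x)" and e: "e > 0"
  shows "\<exists>d>0. \<forall>h. 0 < h \<and> h < d \<longrightarrow>
     \<bar>(f (x + h *\<^sub>R axis i 1 + h *\<^sub>R axis j 1) - f (x + h *\<^sub>R axis j 1) - f (x + h *\<^sub>R axis i 1) + f x)
       - h^2 * pd j (pd i f) x\<bar> \<le> e * h^2"
proof -
  obtain r where r: "r > 0" "ball x r \<subseteq> S" using S openE by metis
  define F where "F = frechet_derivative (pd i f) (at x)"
  have hasF: "(pd i f has_derivative F) (at x)" using di frechet_derivative_works F_def by blast
  have linF: "linear F" using hasF has_derivative_linear by blast
  obtain d where d: "d > 0" "\<forall>y. norm (y - x) < d \<longrightarrow>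
      norm (pd i f y - pd i f x - F (y - x)) \<le> (e/4) * norm (y - x)"
    using hasF[unfolded has_derivative_at_alt] e by (meson divide_pos_pos zero_less_numeral)
  define ei where "ei = (axis i 1 :: real^'m)"
  define u where "u = (axis j 1 :: real^'m)"
  have nei: "norm ei = 1" "norm u = 1" unfolding ei_def u_def by simp_all
  have D: "pd j (pd i f) x = F u" unfolding pd_def F_def u_def by simp
  show ?thesis
  proof (intro exI[of _ "min d r / 3"] conjI allI impI)
    show "0 < min d r / 3" using d r by simp
    fix h :: real assume h: "0 < h \<and> h < min d r / 3"
    have inS: "x + a *\<^sub>R u + s *\<^sub>R ei \<in> S" "norm ((x + a *\<^sub>R u + s *\<^sub>R ei) - x) \<le> 2*h"
      if "0 \<le> s" "s \<le> h" "0 \<le> a" "a \<le> h" for s a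
    proof -
      have "norm (a *\<^sub>R u + s *\<^sub>R ei) \<le> norm (a *\<^sub>R u) + norm (s *\<^sub>R ei)" by (rule norm_triangle_ineq)
      also have "\<dots> = a + s" using nei that by simp
      finally have n: "norm (a *\<^sub>R u + s *\<^sub>R ei) \<le> 2*h" using that by simp
      then show "norm ((x + a *\<^sub>R u + s *\<^sub>R ei) - x) \<le> 2*h" by (simp add: add.assoc)
      have "norm (-(a *\<^sub>R u) - s *\<^sub>R ei) = norm (a *\<^sub>R u + s *\<^sub>R ei)"
        by (metis minus_add_distrib norm_minus_cancel diff_conv_add_uminus)
      then have "dist x (x + a *\<^sub>R u + s *\<^sub>R ei) < r" using n h by (simp add: dist_norm add.assoc)
      then show "x + a *\<^sub>R u + s *\<^sub>R ei \<in> S" using r by auto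
    qed
    define w where "w s = f ((x + h *\<^sub>R u) + s *\<^sub>R ei) - f ((x + 0 *\<^sub>R u) + s *\<^sub>R ei)" for s
    have wd: "(w has_derivative (\<lambda>dd. dd * (pd i f (x + h *\<^sub>R u + s *\<^sub>R ei) - pd i f (x + 0 *\<^sub>R u + s *\<^sub>R ei)))) (at s within {0..h})"
      if "0 \<le> s" "s \<le> h" for s
    proof -
      have a1: "f differentiable (at ((x + h *\<^sub>R u) + s *\<^sub>R ei))" using df inS(1)[of s h] that h by auto
      have a2: "f differentiable (at ((x + 0 *\<^sub>R u) + s *\<^sub>R ei))" using df inS(1)[of s 0] that h by auto
      have "(w has_derivative (\<lambda>dd. dd * frechet_derivative f (at ((x + h *\<^sub>R u) + s *\<^sub>R ei)) ei
             - dd * frechet_derivative f (at ((x + 0 *\<^sub>R u) + s *\<^sub>R ei)) ei)) (at s within {0..h})"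
        unfolding w_def[abs_def] by (intro has_derivative_diff line_deriv a1 a2)
      then show ?thesis unfolding pd_def ei_def by (simp add: algebra_simps)
    qed
    obtain s where s: "s \<in> {0<..<h}" "w h - w 0 = (h - 0) * (pd i f (x + h *\<^sub>R u + s *\<^sub>R ei) - pd i f (x + 0 *\<^sub>R u + s *\<^sub>R ei))"
      using mvt_simple[of 0 h w, OF _ wd] h by auto
    define y1 where "y1 = x + h *\<^sub>R u + s *\<^sub>R ei"
    define y2 where "y2 = x + 0 *\<^sub>R u + s *\<^sub>R ei"
    have n1: "norm (y1 - x) \<le> 2*h" using inS(2)[of s h] s h unfolding y1_def by auto
    have n2: "norm (y2 - x) \<le> 2*h" using inS(2)[of s 0] s h unfolding y2_def by auto
    have b1: "\<bar>pd i f y1 - pd i f x - F (y1 - x)\<bar> \<le> (e/4) * (2*h)"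
    proof -
      have "norm (y1 - x) < d" using n1 h by simp
      then have "\<bar>pd i f y1 - pd i f x - F (y1 - x)\<bar> \<le> (e/4) * norm (y1 - x)" using d by auto
      also have "\<dots> \<le> (e/4) * (2*h)" using n1 e by (intro mult_left_mono) auto
      finally show ?thesis .
    qed
    have b2: "\<bar>pd i f y2 - pd i f x - F (y2 - x)\<bar> \<le> (e/4) * (2*h)"
    proof -
      have "norm (y2 - x) < d" using n2 h by simp
      then have "\<bar>pd i f y2 - pd i f x - F (y2 - x)\<bar> \<le> (e/4) * norm (y2 - x)" using d by auto
      also have "\<dots> \<le> (e/4) * (2*h)" using n2 e by (intro mult_left_mono) auto
      finally show ?thesis .
    qed
    have Fd: "F (y1 - x) - F (y2 - x) = h * F u"
    proof -
      have "F (y1 - x) - F (y2 - x) = F ((y1 - x) - (y2 - x))" using linear_diff[OF linF] by simp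
      also have "(y1 - x) - (y2 - x) = h *\<^sub>R u" unfolding y1_def y2_def by simp
      finally show ?thesis using linear_scale[OF linF] by simp
    qed
    have wdiff: "w h - w 0 = f (x + h *\<^sub>R axis i 1 + h *\<^sub>R axis j 1) - f (x + h *\<^sub>R axis j 1) - f (x + h *\<^sub>R axis i 1) + f x"
      unfolding w_def ei_def u_def by (simp add: algebra_simps)
    have "pd i f y1 - pd i f y2 = (pd i f y1 - pd i f x - F (y1 - x)) - (pd i f y2 - pd i f x - F (y2 - x)) + h * F u"
      using Fd by simp
    then have "\<bar>(pd i f y1 - pd i f y2) - h * F u\<bar> \<le> (e/4) * (2*h) + (e/4) * (2*h)"
      using b1 b2 by linarith
    then have "h * \<bar>(pd i f y1 - pd i f y2) - h * F u\<bar> \<le> h * ((e/4) * (2*h) + (e/4) * (2*h))"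
      using h by (intro mult_left_mono) auto
    moreover have "h * ((e/4) * (2*h) + (e/4) * (2*h)) \<le> e * h^2" using h e by (simp add: power2_eq_square field_simps)
    moreover have "\<bar>h * (pd i f y1 - pd i f y2) - h^2 * F u\<bar> = h * \<bar>(pd i f y1 - pd i f y2) - h * F u\<bar>"
    proof -
      have "h * (pd i f y1 - pd i f y2) - h^2 * F u = h * ((pd i f y1 - pd i f y2) - h * F u)"
        by (simp add: power2_eq_square algebra_simps)
      then show ?thesis using h by (simp add: abs_mult)
    qed
    ultimately have "\<bar>h * (pd i f y1 - pd i f y2) - h^2 * F u\<bar> \<le> e * h^2"
      by linarith
    then show "\<bar>(f (x + h *\<^sub>R axis i 1 + h *\<^sub>R axis j 1) - f (x + h *\<^sub>R axis j 1) - f (x + h *\<^sub>R axis i 1) + f x)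
       - h^2 * pd j (pd i f) x\<bar> \<le> e * h^2"
      using s(2) wdiff D unfolding y1_def y2_def by simp
  qed
qed

lemma schwarz:
  fixes f :: "real^'m::finite \<Rightarrow> real"
  assumes S: "open S" "x \<in> S" and df: "\<forall>y\<in>S. f differentiable (at y)"
    and di: "pd i f differentiable (at x)" and dj: "pd j f differentiable (at x)"
  shows "pd j (pd i f) x = pd i (pd j f) x"
proof (rule ccontr)
  define A where "A = pd j (pd i f) x"
  define B where "B = pd i (pd j f) x"
  assume ne: "pd j (pd i f) x \<noteq> pd i (pd j f) x"
  then have pos: "\<bar>A - B\<bar> / 4 > 0" unfolding A_def B_def by simp
  obtain d1 where d1: "d1 > 0" "\<forall>h. 0 < h \<and> h < d1 \<longrightarrow>
     \<bar>(f (x + h *\<^sub>R axis i 1 + h *\<^sub>R axis j 1) - f (x + h *\<^sub>R axis j 1) - f (x + h *\<^sub>R axis i 1) + f x)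
       - h^2 * A\<bar> \<le> (\<bar>A - B\<bar> / 4) * h^2"
    using schwarz_aux[OF S df di pos, of j] unfolding A_def by blast
  obtain d2 where d2: "d2 > 0" "\<forall>h. 0 < h \<and> h < d2 \<longrightarrow>
     \<bar>(f (x + h *\<^sub>R axis j 1 + h *\<^sub>R axis i 1) - f (x + h *\<^sub>R axis i 1) - f (x + h *\<^sub>R axis j 1) + f x)
       - h^2 * B\<bar> \<le> (\<bar>A - B\<bar> / 4) * h^2"
    using schwarz_aux[OF S df dj pos, of i] unfolding B_def by blast
  define h where "h = min d1 d2 / 2"
  have h: "0 < h" "h < d1" "h < d2" using d1 d2 unfolding h_def by auto
  have e1: "x + h *\<^sub>R axis j 1 + h *\<^sub>R axis i 1 = x + h *\<^sub>R axis i 1 + h *\<^sub>R axis j 1" by (simp add: algebra_simps)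
  define Q where "Q = f (x + h *\<^sub>R axis i 1 + h *\<^sub>R axis j 1) - f (x + h *\<^sub>R axis j 1) - f (x + h *\<^sub>R axis i 1) + f x"
  have q1: "\<bar>Q - h^2 * A\<bar> \<le> (\<bar>A - B\<bar> / 4) * h^2" using d1 h unfolding Q_def by blast
  have q2: "\<bar>Q - h^2 * B\<bar> \<le> (\<bar>A - B\<bar> / 4) * h^2" using d2 h e1 unfolding Q_def by (simp add: algebra_simps)
  have "\<bar>h^2 * A - h^2 * B\<bar> \<le> (\<bar>A - B\<bar> / 2) * h^2" using q1 q2 by linarith
  moreover have "\<bar>h^2 * A - h^2 * B\<bar> = h^2 * \<bar>A - B\<bar>" by (simp add: abs_mult right_diff_distrib[symmetric])
  ultimately have "h^2 * \<bar>A - B\<bar> \<le> h^2 * (\<bar>A - B\<bar> / 2)" by (simp add: mult.commute)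
  then have "\<bar>A - B\<bar> \<le> \<bar>A - B\<bar> / 2" using h by (simp add: mult_le_cancel_left)
  then show False using pos by simp
qed

lemma pd_add: "f differentiable (at x) \<Longrightarrow> g differentiable (at x) \<Longrightarrow>
   pd i (\<lambda>y. f y + g y) x = pd i f x + pd i g x"
proof -
  assume a: "f differentiable (at x)" "g differentiable (at x)"
  have "((\<lambda>y. f y + g y) has_derivative (\<lambda>h. frechet_derivative f (at x) h + frechet_derivative g (at x) h)) (at x)"
    using has_derivative_add[OF a(1)[unfolded frechet_derivative_works] a(2)[unfolded frechet_derivative_works]] .
  from pd_has[OF this, of i] show ?thesis by (simp add: pd_def algebra_simps)
qed

lemma pd_diff: "f differentiable (at x) \<Longrightarrow> g differentiable (at x) \<Longrightarrow>
   pd i (\<lambda>y. f y - g y) x = pd i f x - pd i g x"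
proof -
  assume a: "f differentiable (at x)" "g differentiable (at x)"
  have "((\<lambda>y. f y - g y) has_derivative (\<lambda>h. frechet_derivative f (at x) h - frechet_derivative g (at x) h)) (at x)"
    using has_derivative_diff[OF a(1)[unfolded frechet_derivative_works] a(2)[unfolded frechet_derivative_works]] .
  from pd_has[OF this, of i] show ?thesis by (simp add: pd_def algebra_simps)
qed

lemma pd_mult: "f differentiable (at x) \<Longrightarrow> g differentiable (at x) \<Longrightarrow>
   pd i (\<lambda>y. f y * g y) x = pd i f x * g x + f x * pd i g x"
proof -
  assume a: "f differentiable (at x)" "g differentiable (at x)"
  have "((\<lambda>y. f y * g y) has_derivative (\<lambda>h. f x * frechet_derivative g (at x) h + frechet_derivative f (at x) h * g x)) (at x)"
    using has_derivative_mult[OF a(1)[unfolded frechet_derivative_works] a(2)[unfolded frechet_derivative_works]] .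
  from pd_has[OF this, of i] show ?thesis by (simp add: pd_def algebra_simps)
qed

lemma pd_const: "pd i (\<lambda>y. c) x = 0"
proof -
  have "pd i (\<lambda>y. c) x = (\<lambda>h. 0) (axis i 1)" by (rule pd_has, rule has_derivative_const)
  then show ?thesis by simp
qed

lemma pd_cmult: "f differentiable (at x) \<Longrightarrow> pd i (\<lambda>y. c * f y) x = c * pd i f x"
  using pd_mult[of "\<lambda>y. c" x f i] by (simp add: pd_const)

lemma pd_sum: "finite A \<Longrightarrow> (\<And>a. a \<in> A \<Longrightarrow> f a differentiable (at x)) \<Longrightarrow>
   pd i (\<lambda>y. \<Sum>a\<in>A. f a y) x = (\<Sum>a\<in>A. pd i (f a) x)"
proof (induction A rule: finite_induct)
  case empty then show ?case by (simp add: pd_const)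
next
  case (insert a A)
  have d: "(\<lambda>y. \<Sum>a\<in>A. f a y) differentiable (at x)"
    using insert by (intro differentiable_sum) auto
  have "pd i (\<lambda>y. \<Sum>a\<in>insert a A. f a y) x = pd i (\<lambda>y. f a y + (\<Sum>a\<in>A. f a y)) x"
    using insert by simp
  also have "\<dots> = pd i (f a) x + pd i (\<lambda>y. \<Sum>a\<in>A. f a y) x"
    using pd_add[of "f a" x "\<lambda>y. \<Sum>a\<in>A. f a y"] insert d by simp
  finally show ?case using insert by simp
qed

definition Rlow :: "(real^'n \<Rightarrow> real^'n^'n) \<Rightarrow> real^'n \<Rightarrow> 'n::finite \<Rightarrow> 'n \<Rightarrow> 'n \<Rightarrow> 'n \<Rightarrow> real" where
  "Rlow G x i j k w = (\<Sum>l\<in>UNIV. G x $ l $ w * Rup G l i j k x)"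

lemma R4_expand: "R4 G x X Y Z W = (\<Sum>i\<in>UNIV. \<Sum>j\<in>UNIV. \<Sum>k\<in>UNIV. \<Sum>w\<in>UNIV.
    X$i * Y$j * Z$k * W$w * Rlow G x i j k w)"
  unfolding R4_def Rlow_def
  apply (rule sum.cong[OF refl])
  apply (rule sum.cong[OF refl])
  apply (rule sum.cong[OF refl])
  apply (subst sum.swap)
  apply (simp add: sum_distrib_left mult.assoc)
  done

lemma Rup_anti1: "Rup G l i j k x = - Rup G l j i k x"
  unfolding Rup_def by (simp add: sum_subtractf algebra_simps)

lemma Rlow_anti1: "Rlow G x i j k w = - Rlow G x j i k w"
  unfolding Rlow_def using Rup_anti1[of G _ i j k x] by (simp add: sum_negf[symmetric])

lemma R4_anti1: "R4 G x X Y Z W = - R4 G x Y X Z W"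
proof -
  have "R4 G x Y X Z W = (\<Sum>j\<in>UNIV. \<Sum>i\<in>UNIV. \<Sum>k\<in>UNIV. \<Sum>w\<in>UNIV.
    Y$j * X$i * Z$k * W$w * Rlow G x j i k w)" by (rule R4_expand)
  also have "\<dots> = (\<Sum>i\<in>UNIV. \<Sum>j\<in>UNIV. \<Sum>k\<in>UNIV. \<Sum>w\<in>UNIV.
    Y$j * X$i * Z$k * W$w * Rlow G x j i k w)" by (rule sum.swap)
  also have "\<dots> = - (\<Sum>i\<in>UNIV. \<Sum>j\<in>UNIV. \<Sum>k\<in>UNIV. \<Sum>w\<in>UNIV.
    X$i * Y$j * Z$k * W$w * Rlow G x i j k w)"
    unfolding sum_negf[symmetric] by (intro sum.cong refl) (subst Rlow_anti1, simp)
  finally show ?thesis by (simp add: R4_expand)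
qed

lemma R4_anti2_from_Rlow:
  assumes "\<And>i j k w. Rlow G x i j k w = - Rlow G x i j w k"
  shows "R4 G x X Y Z W = - R4 G x X Y W Z"
proof -
  have "R4 G x X Y W Z = (\<Sum>i\<in>UNIV. \<Sum>j\<in>UNIV. \<Sum>w\<in>UNIV. \<Sum>k\<in>UNIV.
    X$i * Y$j * W$w * Z$k * Rlow G x i j w k)" by (rule R4_expand)
  also have "\<dots> = (\<Sum>i\<in>UNIV. \<Sum>j\<in>UNIV. \<Sum>k\<in>UNIV. \<Sum>w\<in>UNIV.
    X$i * Y$j * W$w * Z$k * Rlow G x i j w k)"
    by (rule sum.cong[OF refl], rule sum.cong[OF refl], rule sum.swap)
  also have "\<dots> = - (\<Sum>i\<in>UNIV. \<Sum>j\<in>UNIV. \<Sum>k\<in>UNIV. \<Sum>w\<in>UNIV.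
    X$i * Y$j * Z$k * W$w * Rlow G x i j k w)"
    unfolding sum_negf[symmetric] by (intro sum.cong refl) (subst assms, simp add: algebra_simps)
  finally show ?thesis by (simp add: R4_expand)
qed

lemma sum_delta_mult: "(\<Sum>m\<in>UNIV. (if w = m then 1 else 0) * (f m::real)) = f (w::'a::finite)"
proof -
  have "(\<Sum>m\<in>UNIV. (if w = m then 1 else 0) * f m) = (\<Sum>m\<in>UNIV. if w = m then f m else 0)"
    by (intro sum.cong) auto
  then show ?thesis using sum.delta'[of UNIV w f] by simp
qed

lemma Rlow_anti2:
  fixes G :: "real^'m::finite \<Rightarrow> real^'m^'m"
  assumes S: "open S" "x \<in> S"
    and sym: "\<And>y i j. y \<in> S \<Longrightarrow> G y$i$j = G y$j$i"
    and inv: "\<And>y w m. y \<in> S \<Longrightarrow> (\<Sum>l\<in>UNIV. G y$w$l * ginv G y$l$m) = (if w = m then 1 else 0)"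
    and gisym: "\<And>i j. ginv G x$i$j = ginv G x$j$i"
    and dG: "\<And>i j. (\<lambda>y. G y$i$j) differentiable (at x)"
    and dGi: "\<And>i j. (\<lambda>y. ginv G y$i$j) differentiable (at x)"
    and dpG: "\<And>k i j. pd k (\<lambda>y. G y$i$j) differentiable (at x)"
    and schw: "\<And>a b i j. pd a (pd b (\<lambda>y. G y$i$j)) x = pd b (pd a (\<lambda>y. G y$i$j)) x"
  shows "Rlow G x i j k w = - Rlow G x i j w k"
proof -
  define g where "g p q = G x$p$q" for p q
  define gi where "gi p q = ginv G x$p$q" for p q
  define dg where "dg a p q = pd a (\<lambda>y. G y$p$q) x" for a p q
  define dgi where "dgi a p q = pd a (\<lambda>y. ginv G y$p$q) x" for a p q
  define Cf where "Cf y l a b = pd a (\<lambda>z. G z$b$l) y + pd b (\<lambda>z. G z$a$l) y - pd l (\<lambda>z. G z$a$b) y" for y l a b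
  define C where "C l a b = Cf x l a b" for l a b
  define dd where "dd a b p q = pd a (pd b (\<lambda>y. G y$p$q)) x" for a b p q
  define dC where "dC a l p q = dd a p q l + dd a q p l - dd a l p q" for a l p q
  define Ga where "Ga l a b = Gam G l a b x" for l a b
  have Gam_eq: "Gam G l a b = (\<lambda>y. 1/2 * (\<Sum>m\<in>UNIV. ginv G y$l$m * Cf y m a b))" for l a b
    by (rule ext) (simp add: Gam_def Cf_def)
  have Ga_eq: "Ga l a b = 1/2 * (\<Sum>m\<in>UNIV. gi l m * C m a b)" for l a b
    unfolding Ga_def Gam_eq gi_def C_def by simp
  have dCf: "(\<lambda>y. Cf y l a b) differentiable (at x)" for l a b
    unfolding Cf_def using dpG by (intro differentiable_add differentiable_diff) auto
  have pdCf: "pd i (\<lambda>y. Cf y m a b) x = dC i m a b" for i m a b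
  proof -
    have "pd i (\<lambda>y. Cf y m a b) x = pd i (\<lambda>y. pd a (\<lambda>z. G z$b$m) y + pd b (\<lambda>z. G z$a$m) y) x
         - pd i (\<lambda>y. pd m (\<lambda>z. G z$a$b) y) x"
      unfolding Cf_def using dpG by (intro pd_diff differentiable_add) auto
    also have "\<dots> = pd i (pd a (\<lambda>z. G z$b$m)) x + pd i (pd b (\<lambda>z. G z$a$m)) x - pd i (pd m (\<lambda>z. G z$a$b)) x"
      using dpG pd_add[of "pd a (\<lambda>z. G z$b$m)" x "pd b (\<lambda>z. G z$a$m)" i] by simp
    finally show ?thesis unfolding dC_def dd_def by simp
  qed
  have pdGam: "pd i (Gam G l a b) x = 1/2 * (\<Sum>m\<in>UNIV. dgi i l m * C m a b + gi l m * dC i m a b)" for i l a b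
  proof -
    have d1: "(\<lambda>y. ginv G y$l$m * Cf y m a b) differentiable (at x)" for m
      using dGi dCf by (intro differentiable_mult) auto
    have "pd i (Gam G l a b) x = 1/2 * pd i (\<lambda>y. \<Sum>m\<in>UNIV. ginv G y$l$m * Cf y m a b) x"
      unfolding Gam_eq using d1 by (intro pd_cmult differentiable_sum) auto
    also have "pd i (\<lambda>y. \<Sum>m\<in>UNIV. ginv G y$l$m * Cf y m a b) x = (\<Sum>m\<in>UNIV. pd i (\<lambda>y. ginv G y$l$m * Cf y m a b) x)"
      using d1 by (intro pd_sum) auto
    also have "\<dots> = (\<Sum>m\<in>UNIV. dgi i l m * C m a b + gi l m * dC i m a b)"
      using dGi dCf by (intro sum.cong refl) (simp add: pd_mult dgi_def C_def gi_def pdCf)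
    finally show ?thesis .
  qed
  have dinv: "(\<Sum>l\<in>UNIV. dg i w l * gi l m + g w l * dgi i l m) = 0" for i w m
  proof -
    have "pd i (\<lambda>y. \<Sum>l\<in>UNIV. G y$w$l * ginv G y$l$m) x = pd i (\<lambda>y. if w = m then 1 else 0) x"
      using inv by (intro pd_local[OF S]) auto
    also have "\<dots> = 0" by (rule pd_const)
    finally have "pd i (\<lambda>y. \<Sum>l\<in>UNIV. G y$w$l * ginv G y$l$m) x = 0" .
    moreover have "pd i (\<lambda>y. \<Sum>l\<in>UNIV. G y$w$l * ginv G y$l$m) x = (\<Sum>l\<in>UNIV. pd i (\<lambda>y. G y$w$l * ginv G y$l$m) x)"
      using dG dGi by (intro pd_sum differentiable_mult) auto
    moreover have "\<dots> = (\<Sum>l\<in>UNIV. dg i w l * gi l m + g w l * dgi i l m)"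
      using dG dGi by (intro sum.cong refl) (simp add: pd_mult dg_def gi_def g_def dgi_def)
    ultimately show ?thesis by simp
  qed
  have ginvx: "(\<Sum>l\<in>UNIV. g w l * gi l m) = (if w = m then 1 else 0)" for w m
    unfolding g_def gi_def using inv S by simp
  have gsym: "g p q = g q p" for p q unfolding g_def using sym S by simp
  have dgsym: "dg a p q = dg a q p" for a p q
    unfolding dg_def using sym by (intro pd_local[OF S]) auto
  have dgC: "dg i w l = 1/2 * (C w i l + C l i w)" for i w l
    unfolding C_def Cf_def dg_def using dgsym[unfolded dg_def, of i w l] by simp
  have ddsym: "dd a b p q = dd b a p q" for a b p q unfolding dd_def by (rule schw)
  have A: "(\<Sum>l\<in>UNIV. g l w * pd i (Gam G l j k) x) = - (\<Sum>l\<in>UNIV. dg i w l * Ga l j k) + 1/2 * dC i w j k" for i j k w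
  proof -
    have "(\<Sum>l\<in>UNIV. g l w * pd i (Gam G l j k) x)
        = (\<Sum>l\<in>UNIV. \<Sum>m\<in>UNIV. 1/2 * (g w l * dgi i l m * C m j k) + 1/2 * (g w l * gi l m * dC i m j k))"
      unfolding pdGam by (simp add: sum_distrib_left gsym[of _ w] algebra_simps)
    also have "\<dots> = (\<Sum>m\<in>UNIV. \<Sum>l\<in>UNIV. 1/2 * (g w l * dgi i l m * C m j k) + 1/2 * (g w l * gi l m * dC i m j k))"
      by (rule sum.swap)
    also have "\<dots> = (\<Sum>m\<in>UNIV. 1/2 * ((\<Sum>l\<in>UNIV. g w l * dgi i l m) * C m j k) + 1/2 * ((\<Sum>l\<in>UNIV. g w l * gi l m) * dC i m j k))"
      by (simp add: sum.distrib sum_distrib_left sum_distrib_right)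
    also have "\<dots> = (\<Sum>m\<in>UNIV. 1/2 * ((- (\<Sum>l\<in>UNIV. dg i w l * gi l m)) * C m j k) + 1/2 * ((if w = m then 1 else 0) * dC i m j k))"
    proof (intro sum.cong refl)
      fix m
      have "(\<Sum>l\<in>UNIV. g w l * dgi i l m) = - (\<Sum>l\<in>UNIV. dg i w l * gi l m)"
        using dinv[of i w m] by (simp add: sum.distrib) 
      then show "1/2 * ((\<Sum>l\<in>UNIV. g w l * dgi i l m) * C m j k) + 1/2 * ((\<Sum>l\<in>UNIV. g w l * gi l m) * dC i m j k)
          = 1/2 * ((- (\<Sum>l\<in>UNIV. dg i w l * gi l m)) * C m j k) + 1/2 * ((if w = m then 1 else 0) * dC i m j k)"
        using ginvx[of w m] by simp
    qed
    also have "\<dots> = - (\<Sum>m\<in>UNIV. \<Sum>l\<in>UNIV. 1/2 * (dg i w l * gi l m * C m j k)) + 1/2 * (\<Sum>m\<in>UNIV. (if w = m then 1 else 0) * dC i m j k)"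
      by (simp add: sum.distrib sum_subtractf sum_distrib_left sum_distrib_right sum_negf algebra_simps del: mult_zero_left mult_1_left)
    also have "(\<Sum>m\<in>UNIV. (if w = m then 1 else 0) * dC i m j k) = dC i w j k" by (rule sum_delta_mult)
    also have "(\<Sum>m\<in>UNIV. \<Sum>l\<in>UNIV. 1/2 * (dg i w l * gi l m * C m j k)) = (\<Sum>l\<in>UNIV. dg i w l * Ga l j k)"
      unfolding Ga_eq by (subst sum.swap) (simp add: sum_distrib_left algebra_simps)
    finally show ?thesis .
  qed
  have B: "(\<Sum>l\<in>UNIV. g l w * (\<Sum>m\<in>UNIV. Ga l i m * Ga m j k)) = 1/2 * (\<Sum>m\<in>UNIV. C w i m * Ga m j k)" for i j k w
  proof -
    have gG: "(\<Sum>l\<in>UNIV. g l w * Ga l i m) = 1/2 * C w i m" for m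
    proof -
      have "(\<Sum>l\<in>UNIV. g l w * Ga l i m) = (\<Sum>l\<in>UNIV. \<Sum>p\<in>UNIV. 1/2 * (g w l * gi l p * C p i m))"
        unfolding Ga_eq by (simp add: sum_distrib_left gsym[of _ w] algebra_simps)
      also have "\<dots> = (\<Sum>p\<in>UNIV. 1/2 * ((\<Sum>l\<in>UNIV. g w l * gi l p) * C p i m))"
        by (subst sum.swap) (simp add: sum_distrib_left sum_distrib_right)
      also have "\<dots> = (\<Sum>p\<in>UNIV. 1/2 * ((if w = p then 1 else 0) * C p i m))"
        using ginvx by simp
      also have "\<dots> = 1/2 * (\<Sum>p\<in>UNIV. (if w = p then 1 else 0) * C p i m)" by (simp add: sum_distrib_left del: mult_zero_left mult_1_left)
      also have "\<dots> = 1/2 * C w i m" by (simp only: sum_delta_mult)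
      finally show ?thesis .
    qed
    have "(\<Sum>l\<in>UNIV. g l w * (\<Sum>m\<in>UNIV. Ga l i m * Ga m j k)) = (\<Sum>m\<in>UNIV. (\<Sum>l\<in>UNIV. g l w * Ga l i m) * Ga m j k)"
    proof -
      have "(\<Sum>l\<in>UNIV. g l w * (\<Sum>m\<in>UNIV. Ga l i m * Ga m j k)) = (\<Sum>l\<in>UNIV. \<Sum>m\<in>UNIV. g l w * Ga l i m * Ga m j k)"
        by (simp add: sum_distrib_left mult.assoc)
      also have "\<dots> = (\<Sum>m\<in>UNIV. \<Sum>l\<in>UNIV. g l w * Ga l i m * Ga m j k)" by (rule sum.swap)
      also have "\<dots> = (\<Sum>m\<in>UNIV. (\<Sum>l\<in>UNIV. g l w * Ga l i m) * Ga m j k)" by (simp add: sum_distrib_right)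
      finally show ?thesis .
    qed
    also have "\<dots> = 1/2 * (\<Sum>m\<in>UNIV. C w i m * Ga m j k)"
      unfolding gG by (simp add: sum_distrib_left mult.assoc)
    finally show ?thesis .
  qed
  have Rform: "Rlow G x i j k w = 1/2 * (dC i w j k - dC j w i k) - 1/2 * (\<Sum>l\<in>UNIV. C l i w * Ga l j k)
        + 1/2 * (\<Sum>l\<in>UNIV. C l j w * Ga l i k)" for i j k w
  proof -
    have "Rlow G x i j k w = (\<Sum>l\<in>UNIV. g l w * pd i (Gam G l j k) x) - (\<Sum>l\<in>UNIV. g l w * pd j (Gam G l i k) x)
       + (\<Sum>l\<in>UNIV. g l w * (\<Sum>m\<in>UNIV. Ga l i m * Ga m j k)) - (\<Sum>l\<in>UNIV. g l w * (\<Sum>m\<in>UNIV. Ga l j m * Ga m i k))"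
      unfolding Rlow_def Rup_def g_def Ga_def
      by (simp add: sum_subtractf sum.distrib algebra_simps)
    also have "\<dots> = 1/2 * (dC i w j k - dC j w i k) - (\<Sum>l\<in>UNIV. (dg i w l - 1/2 * C w i l) * Ga l j k)
        + (\<Sum>l\<in>UNIV. (dg j w l - 1/2 * C w j l) * Ga l i k)"
      unfolding A B by (simp add: sum_subtractf sum_distrib_left algebra_simps)
    also have "\<dots> = 1/2 * (dC i w j k - dC j w i k) - 1/2 * (\<Sum>l\<in>UNIV. C l i w * Ga l j k)
        + 1/2 * (\<Sum>l\<in>UNIV. C l j w * Ga l i k)"
      unfolding dgC by (simp add: sum_distrib_left algebra_simps)
    finally show ?thesis .
  qed
  define H where "H a b c d = (\<Sum>l\<in>UNIV. \<Sum>m\<in>UNIV. gi l m * C l a b * C m c d)" for a b c d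
  have HG: "(\<Sum>l\<in>UNIV. C l a b * Ga l c d) = 1/2 * H a b c d" for a b c d
    unfolding H_def Ga_eq by (simp add: sum_distrib_left algebra_simps)
  have Hsym: "H a b c d = H c d a b" for a b c d
  proof -
    have "H c d a b = (\<Sum>m\<in>UNIV. \<Sum>l\<in>UNIV. gi m l * C m c d * C l a b)" unfolding H_def by simp
    also have "\<dots> = (\<Sum>l\<in>UNIV. \<Sum>m\<in>UNIV. gi m l * C m c d * C l a b)" by (rule sum.swap)
    also have "\<dots> = H a b c d" unfolding H_def gi_def using gisym by (simp add: algebra_simps)
    finally show ?thesis by simp
  qed
  have dCanti: "dC i w j k - dC j w i k = - (dC i k j w - dC j k i w)"
    unfolding dC_def using ddsym[of i j k w] ddsym[of i j w k] by simp
  show ?thesis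
    unfolding Rform HG using dCanti Hsym[of i w j k] Hsym[of j w i k] by (simp add: field_simps)
qed

definition C2 :: "(real^'n::finite) set \<Rightarrow> (real^'n \<Rightarrow> real) \<Rightarrow> bool" where
  "C2 U f \<longleftrightarrow> (\<forall>p\<in>U. f differentiable (at p)) \<and> (\<forall>k. \<forall>p\<in>U. pd k f differentiable (at p))"

lemma smooth_C2: "smooth_fun U f \<Longrightarrow> C2 U f"
proof -
  assume "smooth_fun U f"
  then have "Ck (Suc (Suc 0)) U f" unfolding smooth_fun_def by blast
  then show ?thesis unfolding C2_def by auto
qed

lemma C2_const: "C2 (U :: (real^'n::finite) set) (\<lambda>p. c)"
  unfolding C2_def
proof (intro conjI ballI allI)
  fix p :: "real^'n" and k
  show "(\<lambda>p. c) differentiable at p" by simp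
  have "pd k (\<lambda>p::real^'n. c) = (\<lambda>p. 0)" by (rule ext) (rule pd_const)
  then show "pd k (\<lambda>p. c) differentiable at p" by simp
qed

lemma C2_add:
  assumes U: "open U" and f: "C2 U f" and g: "C2 U g"
  shows "C2 U (\<lambda>p. f p + g p)"
  unfolding C2_def
proof (intro conjI ballI allI)
  fix p k assume p: "p \<in> U"
  have fg: "f differentiable at p" "g differentiable at p" using f g p unfolding C2_def by auto
  then show "(\<lambda>p. f p + g p) differentiable at p" by (intro differentiable_add fg)
  have "\<And>q. q \<in> U \<Longrightarrow> pd k f q + pd k g q = pd k (\<lambda>p. f p + g p) q"
    using f g unfolding C2_def by (simp add: pd_add)
  moreover have "(\<lambda>q. pd k f q + pd k g q) differentiable at p"
  proof -
    have a: "pd k f differentiable at p" "pd k g differentiable at p" using f g p unfolding C2_def by auto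
    show ?thesis by (intro differentiable_add a)
  qed
  ultimately show "pd k (\<lambda>p. f p + g p) differentiable at p" by (rule diff_local[OF U p, of "\<lambda>q. pd k f q + pd k g q" "pd k (\<lambda>p. f p + g p)"])
qed

lemma C2_diff:
  assumes U: "open U" and f: "C2 U f" and g: "C2 U g"
  shows "C2 U (\<lambda>p. f p - g p)"
  unfolding C2_def
proof (intro conjI ballI allI)
  fix p k assume p: "p \<in> U"
  have fg: "f differentiable at p" "g differentiable at p" using f g p unfolding C2_def by auto
  then show "(\<lambda>p. f p - g p) differentiable at p" by (intro differentiable_diff fg)
  have "\<And>q. q \<in> U \<Longrightarrow> pd k f q - pd k g q = pd k (\<lambda>p. f p - g p) q"
    using f g unfolding C2_def by (simp add: pd_diff)
  moreover have "(\<lambda>q. pd k f q - pd k g q) differentiable at p"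
  proof -
    have a: "pd k f differentiable at p" "pd k g differentiable at p" using f g p unfolding C2_def by auto
    show ?thesis by (intro differentiable_diff a)
  qed
  ultimately show "pd k (\<lambda>p. f p - g p) differentiable at p" by (rule diff_local[OF U p, of "\<lambda>q. pd k f q - pd k g q" "pd k (\<lambda>p. f p - g p)"])
qed

lemma C2_mult:
  assumes U: "open U" and f: "C2 U f" and g: "C2 U g"
  shows "C2 U (\<lambda>p. f p * g p)"
  unfolding C2_def
proof (intro conjI ballI allI)
  fix p k assume p: "p \<in> U"
  have fg: "f differentiable at p" "g differentiable at p" using f g p unfolding C2_def by auto
  then show "(\<lambda>p. f p * g p) differentiable at p" by (intro differentiable_mult fg)
  have "\<And>q. q \<in> U \<Longrightarrow> pd k f q * g q + f q * pd k g q = pd k (\<lambda>p. f p * g p) q"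
    using f g unfolding C2_def by (simp add: pd_mult)
  moreover have "(\<lambda>q. pd k f q * g q + f q * pd k g q) differentiable at p"
  proof -
    have a: "pd k f differentiable at p" "g differentiable at p" "f differentiable at p" "pd k g differentiable at p"
      using f g p unfolding C2_def by auto
    show ?thesis by (intro differentiable_add differentiable_mult a)
  qed
  ultimately show "pd k (\<lambda>p. f p * g p) differentiable at p"
    by (rule diff_local[OF U p, of "\<lambda>q. pd k f q * g q + f q * pd k g q" "pd k (\<lambda>p. f p * g p)"])
qed

lemma C2_sum:
  assumes U: "open U" and "finite A" and "\<And>a. a \<in> A \<Longrightarrow> C2 U (f a)"
  shows "C2 U (\<lambda>p. \<Sum>a\<in>A. f a p)"
  using assms(2,3)
proof (induction A rule: finite_induct)
  case empty then show ?case using C2_const[of U 0] by simp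
next
  case (insert a A)
  have c: "C2 U (\<lambda>p. f a p + (\<Sum>a\<in>A. f a p))" using insert.IH insert.prems by (intro C2_add[OF U]) auto
  have e: "(\<lambda>p. \<Sum>a\<in>insert a A. f a p) = (\<lambda>p. f a p + (\<Sum>a\<in>A. f a p))"
    using insert(1,2) by (simp add: sum.insert)
  show ?case unfolding e by (rule c)
qed

lemma C2_diffI: "C2 U f \<Longrightarrow> p \<in> U \<Longrightarrow> f differentiable (at p)" unfolding C2_def by auto
lemma C2_pdI: "C2 U f \<Longrightarrow> p \<in> U \<Longrightarrow> pd k f differentiable (at p)" unfolding C2_def by auto

lemma bl_tco: "bounded_linear (tco :: real^('n::finite option) \<Rightarrow> real)"
  unfolding tco_def[abs_def] by (rule bounded_linear_vec_nth)

lemma lin_pco: "linear (pco :: real^('n::finite option) \<Rightarrow> real^'n)"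
  unfolding pco_def[abs_def] by (auto simp: linear_iff vec_eq_iff)

lemma bl_pco: "bounded_linear (pco :: real^('n::finite option) \<Rightarrow> real^'n)"
  using lin_pco linear_conv_bounded_linear by blast

lemma pco_axis: "pco (axis (Some k) 1 :: real^('n::finite option)) = axis k 1"
   "pco (axis None 1 :: real^('n::finite option)) = 0"
  unfolding pco_def by (auto simp: vec_eq_iff axis_def)

lemma tco_axis: "tco (axis (Some k) 1 :: real^('n::finite option)) = 0"
   "tco (axis None 1 :: real^('n::finite option)) = 1"
  unfolding tco_def by (auto simp: axis_def)

lemma lift_has:
  fixes f :: "real^'n::finite \<Rightarrow> real"
  assumes "(f has_derivative f') (at (pco y))"
  shows "((\<lambda>y. f (pco y)) has_derivative (\<lambda>v. f' (pco v))) (at y)"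
  by (rule has_derivative_compose[OF bounded_linear_imp_has_derivative[OF bl_pco] assms])

lemma lift_diff:
  fixes f :: "real^'n::finite \<Rightarrow> real"
  assumes "f differentiable (at (pco y))" shows "(\<lambda>y. f (pco y)) differentiable (at y)"
proof -
  from assms obtain D where "(f has_derivative D) (at (pco y))" unfolding differentiable_def by blast
  from lift_has[OF this] show ?thesis unfolding differentiable_def by blast
qed

lemma pd_lift:
  assumes "f differentiable (at (pco y))"
  shows "pd (Some k) (\<lambda>y. f (pco y)) y = pd k f (pco y)" "pd None (\<lambda>y. f (pco y)) y = 0"
proof -
  let ?F = "frechet_derivative f (at (pco y))"
  have h: "(f has_derivative ?F) (at (pco y))" using assms frechet_derivative_works by blast
  have l: "linear ?F" using h has_derivative_linear by blast
  show "pd (Some k) (\<lambda>y. f (pco y)) y = pd k f (pco y)"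
  proof -
    have "pd (Some k) (\<lambda>y. f (pco y)) y = ?F (pco (axis (Some k) 1))" using pd_has[OF lift_has[OF h]] by simp
    also have "\<dots> = ?F (axis k 1)" by (simp only: pco_axis)
    finally show ?thesis by (simp add: pd_def)
  qed
  show "pd None (\<lambda>y. f (pco y)) y = 0"
  proof -
    have "pd None (\<lambda>y. f (pco y)) y = ?F (pco (axis None 1))" using pd_has[OF lift_has[OF h]] by simp
    also have "\<dots> = ?F 0" by (simp only: pco_axis)
    also have "\<dots> = 0" by (rule linear_0[OF l])
    finally show ?thesis .
  qed
qed

lemma tlift_has:
  assumes "(\<phi> has_real_derivative d) (at (tco y))"
  shows "((\<lambda>y. \<phi> (tco y)) has_derivative (\<lambda>v. d * tco v)) (at y)"
  by (rule has_derivative_compose[OF bounded_linear_imp_has_derivative[OF bl_tco] has_field_derivative_imp_has_derivative[OF assms]])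

lemma pd_tlift:
  assumes "(\<phi> has_real_derivative d) (at (tco y))"
  shows "pd None (\<lambda>y. \<phi> (tco y)) y = d" "pd (Some k) (\<lambda>y. \<phi> (tco y)) y = 0"
    "(\<lambda>y. \<phi> (tco y)) differentiable (at y)"
  using pd_has[OF tlift_has[OF assms]] tlift_has[OF assms] by (auto simp: tco_axis differentiable_def)

lemma sum_axis: "(\<Sum>k\<in>UNIV. (axis i 1 :: real^'n::finite) $ k * f k) = f i"
proof -
  have "(\<Sum>k\<in>UNIV. (axis i 1 :: real^'n) $ k * f k) = (\<Sum>k\<in>UNIV. if k = i then f k else 0)"
    by (intro sum.cong) (auto simp: axis_def)
  then show ?thesis by (simp add: sum.delta)
qed

lemma sum_axis': "(\<Sum>k\<in>UNIV. f k * (axis i 1 :: real^'n::finite) $ k) = f i"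
  using sum_axis[of i f] by (simp add: mult.commute)

lemma gv_axis: "gv G x (axis i 1) Y = (\<Sum>j\<in>UNIV. G x $ i $ j * Y $ j)"
  unfolding gv_def by (simp add: mult.assoc sum_distrib_left[symmetric] sum_axis)

lemma gv_axis_right: "gv G x X (axis j 1) = (\<Sum>i\<in>UNIV. X $ i * G x $ i $ j)"
  unfolding gv_def by (simp add: sum_axis')

lemma mm_nth: "(A ** B) $ i $ j = (\<Sum>k\<in>UNIV. A $ i $ k * B $ k $ j)"
  by (simp add: matrix_matrix_mult_def)

lemma mv_nth: "(A *v v) $ i = (\<Sum>k\<in>UNIV. A $ i $ k * v $ k)"
  by (simp add: matrix_vector_mult_def)

lemma mat_nth: "(mat 1 :: real^'n^'n) $ i $ j = (if i = j then 1 else 0)"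
  by (simp add: mat_def)

lemma negmat_mv: "(- mat 1 :: real^'n::finite^'n) *v v = - v"
proof -
  have "((- mat 1 :: real^'n^'n) *v v) $ i = - v $ i" for i
  proof -
    have "((- mat 1 :: real^'n^'n) *v v) $ i = (\<Sum>k\<in>UNIV. - ((if i = k then 1 else 0) * v $ k))"
      unfolding mv_nth by (simp add: mat_def)
    also have "\<dots> = - v $ i" by (simp add: sum_negf sum_delta_mult)
    finally show ?thesis .
  qed
  then show ?thesis by (simp add: vec_eq_iff)
qed

lemma inv_unique:
  fixes A B :: "real^'n::finite^'n"
  assumes "A ** B = mat 1"
  shows "matrix_inv A = B"
proof -
  have BA: "B ** A = mat 1" using assms matrix_left_right_inverse by blast
  have "\<exists>A'. A ** A' = mat 1 \<and> A' ** A = mat 1" using assms BA by blast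
  then have M: "A ** matrix_inv A = mat 1 \<and> matrix_inv A ** A = mat 1"
    unfolding matrix_inv_def by (rule someI_ex)
  have "matrix_inv A = matrix_inv A ** (A ** B)" using assms by simp
  also have "\<dots> = (matrix_inv A ** A) ** B" by (simp add: matrix_mul_assoc)
  also have "\<dots> = B" using M by simp
  finally show ?thesis .
qed

lemma inv_sym:
  fixes A B :: "real^'n::finite^'n"
  assumes "A ** B = mat 1" "transpose A = A"
  shows "transpose B = B"
proof -
  have BA: "B ** A = mat 1" using assms matrix_left_right_inverse by blast
  have "transpose B ** A = mat 1"
    using arg_cong[OF assms(1), of transpose] assms(2) by (simp add: matrix_transpose_mul)
  then have "transpose B = transpose B ** (A ** B)" using assms by simp
  also have "\<dots> = (transpose B ** A) ** B" by (simp add: matrix_mul_assoc)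
  finally show ?thesis using \<open>transpose B ** A = mat 1\<close> by simp
qed

context
  fixes U :: "(real^'n::finite) set" and J h :: "real^'n \<Rightarrow> real^'n^'n"
  assumes AN: "almost_norden U J h"
begin

lemma openU: "open U" using AN unfolding almost_norden_def by blast

lemma htr: "p \<in> U \<Longrightarrow> transpose (h p) = h p"
  using AN unfolding almost_norden_def by blast

lemma hsym: "p \<in> U \<Longrightarrow> h p $ i $ j = h p $ j $ i"
proof -
  assume p: "p \<in> U"
  have "transpose (h p) $ j $ i = h p $ j $ i" using htr[OF p] by simp
  then show ?thesis by (simp add: transpose_def)
qed

lemma JJ: "p \<in> U \<Longrightarrow> J p ** J p = - mat 1"
  using AN unfolding almost_norden_def by blast

lemma hdet: "p \<in> U \<Longrightarrow> det (h p) \<noteq> 0"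
  using AN unfolding almost_norden_def by blast

lemma hJsym: "p \<in> U \<Longrightarrow> (h p ** J p) $ i $ j = (h p ** J p) $ j $ i"
proof -
  assume p: "p \<in> U"
  have N: "gv h p (J p *v X) (J p *v Y) = - gv h p X Y" for X Y using AN p unfolding almost_norden_def by blast
  have gvhJ: "gv h p (axis i 1) (J p *v axis j 1) = (h p ** J p) $ i $ j" for i j
    unfolding gv_axis mm_nth mv_nth by (simp add: sum_axis')
  have JJv: "J p *v (J p *v v) = - v" for v
    using JJ[OF p] by (simp add: matrix_vector_mul_assoc negmat_mv)
  have gvneg: "gv h p X (- Y) = - gv h p X Y" for X Y unfolding gv_def by (simp add: sum_negf[symmetric])
  have gvJ: "gv h p (J p *v axis j 1) (axis i 1) = (h p ** J p) $ i $ j" for i j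
  proof -
    have "gv h p (J p *v axis j 1) (axis i 1) = (\<Sum>k\<in>UNIV. J p $ k $ j * h p $ k $ i)"
      unfolding gv_axis_right mv_nth by (simp add: sum_axis sum_axis' mult.commute)
    also have "\<dots> = (h p ** J p) $ i $ j" unfolding mm_nth using hsym[OF p] by (simp add: mult.commute)
    finally show ?thesis .
  qed
  have "(h p ** J p) $ i $ j = gv h p (axis i 1) (J p *v axis j 1)" by (rule gvhJ[symmetric])
  also have "\<dots> = - gv h p (J p *v axis i 1) (J p *v (J p *v axis j 1))" using N by simp
  also have "\<dots> = gv h p (J p *v axis i 1) (axis j 1)" unfolding JJv gvneg by simp
  also have "\<dots> = (h p ** J p) $ j $ i" by (rule gvJ)
  finally show ?thesis .
qed

lemma C2h: "C2 U (\<lambda>p. h p $ i $ j)"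
  using AN unfolding almost_norden_def by (blast intro: smooth_C2)

lemma C2J: "C2 U (\<lambda>p. J p $ i $ j)"
  using AN unfolding almost_norden_def by (blast intro: smooth_C2)

lemma C2hJ: "C2 U (\<lambda>p. (h p ** J p) $ i $ j)"
  unfolding mm_nth by (intro C2_sum[OF openU] C2_mult[OF openU] C2h C2J) auto

end

lemma pd_L:
  assumes f: "f differentiable (at (pco y))" and phi: "(\<phi> has_real_derivative d) (at (tco y))"
  shows "pd None (\<lambda>y. \<phi> (tco y) * f (pco y)) y = d * f (pco y)"
    "pd (Some k) (\<lambda>y. \<phi> (tco y) * f (pco y)) y = \<phi> (tco y) * pd k f (pco y)"
    "(\<lambda>y. \<phi> (tco y) * f (pco y)) differentiable (at y)"
proof -
  have d1: "(\<lambda>y. \<phi> (tco y)) differentiable (at y)" by (rule pd_tlift(3)[OF phi])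
  have d2: "(\<lambda>y. f (pco y)) differentiable (at y)" by (rule lift_diff[OF f])
  show "pd None (\<lambda>y. \<phi> (tco y) * f (pco y)) y = d * f (pco y)"
    using pd_mult[OF d1 d2, of None] pd_tlift(1)[OF phi] pd_lift(2)[OF f] by simp
  show "pd (Some k) (\<lambda>y. \<phi> (tco y) * f (pco y)) y = \<phi> (tco y) * pd k f (pco y)"
    using pd_mult[OF d1 d2, of "Some k"] pd_tlift(2)[OF phi] pd_lift(1)[OF f] by simp
  show "(\<lambda>y. \<phi> (tco y) * f (pco y)) differentiable (at y)" by (intro differentiable_mult d1 d2)
qed

lemma dcos2: "((\<lambda>t. cos (2 * t)) has_real_derivative (- 2 * sin (2 * t))) (at t)"
  by (auto intro!: derivative_eq_intros)
lemma dsin2: "((\<lambda>t. sin (2 * t)) has_real_derivative (2 * cos (2 * t))) (at t)"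
  by (auto intro!: derivative_eq_intros)
lemma dmsin2: "((\<lambda>t. - 2 * sin (2 * t)) has_real_derivative (- 4 * cos (2 * t))) (at t)"
  by (auto intro!: derivative_eq_intros)
lemma dcos2': "((\<lambda>t. 2 * cos (2 * t)) has_real_derivative (- 4 * sin (2 * t))) (at t)"
  by (auto intro!: derivative_eq_intros)

abbreviation "hJ J h p \<equiv> h p ** J p"

lemma G_NN: "ext_metric J h y $ None $ None = 1" by (simp add: ext_metric_def)
lemma G_NS: "ext_metric J h y $ None $ Some i = 0" by (simp add: ext_metric_def)
lemma G_SN: "ext_metric J h y $ Some i $ None = 0" by (simp add: ext_metric_def)
lemma G_SS: "ext_metric J h y $ Some i $ Some j =
   cos (2 * tco y) * h (pco y) $ i $ j - sin (2 * tco y) * hJ J h (pco y) $ i $ j"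
  by (simp add: ext_metric_def htilde_def)

lemma G_N_const: "(\<lambda>y. ext_metric J h y $ None $ j) = (\<lambda>y. if j = None then 1 else 0)"
  by (rule ext) (cases j, simp_all add: G_NN G_NS)
lemma G_N_const2: "(\<lambda>y. ext_metric J h y $ i $ None) = (\<lambda>y. if i = None then 1 else 0)"
  by (rule ext) (cases i, simp_all add: G_NN G_SN)

lemma pd_const_fun: "pd k (\<lambda>y::real^'n::finite. c) = (\<lambda>y. 0)"
  by (rule ext) (rule pd_const)

lemma pdG_N1: "pd k (\<lambda>y. ext_metric J h y $ None $ j) = (\<lambda>y. 0)"
  unfolding G_N_const by (rule pd_const_fun)
lemma pdG_N2: "pd k (\<lambda>y. ext_metric J h y $ i $ None) = (\<lambda>y. 0)"
  unfolding G_N_const2 by (rule pd_const_fun)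

context
  fixes U :: "(real^'n::finite) set" and J h :: "real^'n \<Rightarrow> real^'n^'n"
  assumes AN: "almost_norden U J h"
begin

lemma openE: "open (ext_dom U)"
proof -
  have c1: "continuous_on UNIV (tco :: real^'n option \<Rightarrow> real)"
    by (rule linear_continuous_on[OF bl_tco])
  have c2: "continuous_on UNIV (pco :: real^'n option \<Rightarrow> real^'n)"
    by (rule linear_continuous_on[OF bl_pco])
  have o1: "open (tco -` {0<..} :: (real^'n option) set)" by (rule open_vimage[OF open_greaterThan c1])
  have o2: "open (pco -` U :: (real^'n option) set)" by (rule open_vimage[OF openU[OF AN] c2])
  have "ext_dom U = tco -` {0<..} \<inter> pco -` U" unfolding ext_dom_def by auto
  then show ?thesis using open_Int[OF o1 o2] by simp
qed

lemma Epco: "y \<in> ext_dom U \<Longrightarrow> pco y \<in> U" unfolding ext_dom_def by auto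

lemma G_SS_fun: "(\<lambda>y. ext_metric J h y $ Some i $ Some j) =
   (\<lambda>y. cos (2 * tco y) * h (pco y) $ i $ j - sin (2 * tco y) * hJ J h (pco y) $ i $ j)"
  by (rule ext) (rule G_SS)

lemma pdG_SS:
  assumes y: "y \<in> ext_dom U"
  shows "pd None (\<lambda>y. ext_metric J h y $ Some i $ Some j) y =
          - 2 * sin (2 * tco y) * h (pco y) $ i $ j - 2 * cos (2 * tco y) * hJ J h (pco y) $ i $ j"
    "pd (Some k) (\<lambda>y. ext_metric J h y $ Some i $ Some j) y =
          cos (2 * tco y) * pd k (\<lambda>p. h p $ i $ j) (pco y) - sin (2 * tco y) * pd k (\<lambda>p. hJ J h p $ i $ j) (pco y)"
    "(\<lambda>y. ext_metric J h y $ Some i $ Some j) differentiable (at y)"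
proof -
  have p: "pco y \<in> U" using Epco[OF y] .
  have f1: "(\<lambda>p. h p $ i $ j) differentiable (at (pco y))" using C2h[OF AN] p by (rule C2_diffI)
  have f2: "(\<lambda>p. hJ J h p $ i $ j) differentiable (at (pco y))" using C2hJ[OF AN] p by (rule C2_diffI)
  note L1 = pd_L[where f="\<lambda>p. h p $ i $ j", OF f1 dcos2]
  note L2 = pd_L[where f="\<lambda>p. hJ J h p $ i $ j", OF f2 dsin2]
  show "pd None (\<lambda>y. ext_metric J h y $ Some i $ Some j) y =
          - 2 * sin (2 * tco y) * h (pco y) $ i $ j - 2 * cos (2 * tco y) * hJ J h (pco y) $ i $ j"
    unfolding G_SS_fun using pd_diff[OF L1(3) L2(3), of None] L1(1) L2(1) by simp
  show "pd (Some k) (\<lambda>y. ext_metric J h y $ Some i $ Some j) y =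
          cos (2 * tco y) * pd k (\<lambda>p. h p $ i $ j) (pco y) - sin (2 * tco y) * pd k (\<lambda>p. hJ J h p $ i $ j) (pco y)"
    unfolding G_SS_fun using pd_diff[OF L1(3) L2(3), of "Some k"] L1(2) L2(2) by simp
  show "(\<lambda>y. ext_metric J h y $ Some i $ Some j) differentiable (at y)"
    unfolding G_SS_fun using L1(3) L2(3) by (intro differentiable_diff)
qed

lemma dG: "y \<in> ext_dom U \<Longrightarrow> (\<lambda>y. ext_metric J h y $ i $ j) differentiable (at y)"
proof (cases i)
  case None then show ?thesis using G_N_const[of J h j] by simp
next
  case (Some i') note i = this
  show "y \<in> ext_dom U \<Longrightarrow> ?thesis"
  proof (cases j)
    case None then show ?thesis using G_N_const2[of J h i] by simp
  next
    case (Some j') assume "y \<in> ext_dom U" then show ?thesis using pdG_SS(3) i Some by simp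
  qed
qed

lemma dpG: "y \<in> ext_dom U \<Longrightarrow> pd k (\<lambda>y. ext_metric J h y $ i $ j) differentiable (at y)"
proof -
  assume y: "y \<in> ext_dom U"
  have p: "pco y \<in> U" using Epco[OF y] .
  show ?thesis
  proof (cases "i = None \<or> j = None")
    case True then show ?thesis using pdG_N1[of k J h j] pdG_N2[of k J h i] by auto
  next
    case False
    then obtain i' j' where ij: "i = Some i'" "j = Some j'" by auto
    show ?thesis
    proof (cases k)
      case None
      let ?g = "\<lambda>y. (- 2 * sin (2 * tco y)) * h (pco y) $ i' $ j' - (2 * cos (2 * tco y)) * hJ J h (pco y) $ i' $ j'"
      have e: "\<And>z. z \<in> ext_dom U \<Longrightarrow> ?g z = pd k (\<lambda>y. ext_metric J h y $ i $ j) z"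
        using pdG_SS(1) ij None by simp
      have f1: "(\<lambda>p. h p $ i' $ j') differentiable (at (pco y))" using C2h[OF AN] p by (rule C2_diffI)
      have f2: "(\<lambda>p. hJ J h p $ i' $ j') differentiable (at (pco y))" using C2hJ[OF AN] p by (rule C2_diffI)
      have "?g differentiable (at y)"
        using pd_L(3)[where f="\<lambda>p. h p $ i' $ j'", OF f1 dmsin2] pd_L(3)[where f="\<lambda>p. hJ J h p $ i' $ j'", OF f2 dcos2']
        by (intro differentiable_diff)
      from diff_local[OF openE y, of ?g "pd k (\<lambda>y. ext_metric J h y $ i $ j)", OF e this] show ?thesis by simp
    next
      case (Some k')
      let ?g = "\<lambda>y. cos (2 * tco y) * pd k' (\<lambda>p. h p $ i' $ j') (pco y) - sin (2 * tco y) * pd k' (\<lambda>p. hJ J h p $ i' $ j') (pco y)"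
      have e: "\<And>z. z \<in> ext_dom U \<Longrightarrow> ?g z = pd k (\<lambda>y. ext_metric J h y $ i $ j) z"
        using pdG_SS(2) ij Some by simp
      have f1: "pd k' (\<lambda>p. h p $ i' $ j') differentiable (at (pco y))" using C2h[OF AN] p by (rule C2_pdI)
      have f2: "pd k' (\<lambda>p. hJ J h p $ i' $ j') differentiable (at (pco y))" using C2hJ[OF AN] p by (rule C2_pdI)
      have "?g differentiable (at y)"
        using pd_L(3)[where f="pd k' (\<lambda>p. h p $ i' $ j')", OF f1 dcos2] pd_L(3)[where f="pd k' (\<lambda>p. hJ J h p $ i' $ j')", OF f2 dsin2]
        by (intro differentiable_diff)
      from diff_local[OF openE y, of ?g "pd k (\<lambda>y. ext_metric J h y $ i $ j)", OF e this] show ?thesis by simp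
    qed
  qed
qed

lemma schwG: "x \<in> ext_dom U \<Longrightarrow> pd a (pd b (\<lambda>y. ext_metric J h y $ i $ j)) x = pd b (pd a (\<lambda>y. ext_metric J h y $ i $ j)) x"
  by (rule schwarz[OF openE]) (auto intro: dG dpG)

lemma Gsym: "y \<in> ext_dom U \<Longrightarrow> ext_metric J h y $ i $ j = ext_metric J h y $ j $ i"
proof -
  assume y: "y \<in> ext_dom U"
  have p: "pco y \<in> U" using Epco[OF y] .
  show ?thesis
    by (cases i; cases j) (simp_all add: G_NN G_NS G_SN G_SS hsym[OF AN p] hJsym[OF AN p])
qed

end

lemma sumopt: "(\<Sum>l\<in>(UNIV :: 'a::finite option set). f l) = f None + (\<Sum>c\<in>UNIV. f (Some c))"
proof -
  have "(\<Sum>l\<in>(UNIV :: 'a option set). f l) = (\<Sum>l\<in>insert None (Some ` UNIV). f l)"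
    by (simp only: UNIV_option_conv[symmetric])
  also have "\<dots> = f None + (\<Sum>l\<in>Some ` UNIV. f l)" by (rule sum.insert) auto
  also have "(\<Sum>l\<in>Some ` UNIV. f l) = (\<Sum>c\<in>UNIV. f (Some c))" by (simp add: sum.reindex)
  finally show ?thesis .
qed

definition adj2 :: "'n \<Rightarrow> 'n \<Rightarrow> real^'n^'n \<Rightarrow> real^'n^'n" where
  "adj2 a b M = (\<chi> i j. if i = j then (if i = a then M$b$b else M$a$a) else - M$i$j)"

definition det2 :: "'n \<Rightarrow> 'n \<Rightarrow> real^'n^'n \<Rightarrow> real" where
  "det2 a b M = M$a$a * M$b$b - M$a$b * M$b$a"

context
  fixes a b :: "'n::finite"
  assumes ab: "a \<noteq> b" and U2: "(UNIV :: 'n set) = {a, b}"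
begin

lemma sum2: "(\<Sum>i\<in>UNIV. f i) = f a + f b"
  using ab by (simp add: U2)

lemma two: "i = a \<or> i = b" using U2 by auto

lemma mm2: "(M ** N) $ i $ j = M$i$a * N$a$j + M$i$b * N$b$j"
  by (simp add: mm_nth sum2)

lemma mat2_eq: "(M :: 'x^'n^'n) = N \<longleftrightarrow> M$a$a = N$a$a \<and> M$a$b = N$a$b \<and> M$b$a = N$b$a \<and> M$b$b = N$b$b"
proof
  assume "M$a$a = N$a$a \<and> M$a$b = N$a$b \<and> M$b$a = N$b$a \<and> M$b$b = N$b$b"
  then have "M$i$j = N$i$j" for i j using two[of i] two[of j] by auto
  then show "M = N" by (simp add: vec_eq_iff)
qed simp

lemma adj_mul: "M ** adj2 a b M = det2 a b M *\<^sub>R mat 1" "adj2 a b M ** M = det2 a b M *\<^sub>R mat 1"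
  unfolding mat2_eq mm2 using ab by (auto simp: adj2_def det2_def mat_def algebra_simps)

lemma det2_nz:
  assumes "invertible (M :: real^'n^'n)" shows "det2 a b M \<noteq> 0"
proof
  assume d: "det2 a b M = 0"
  obtain N where N: "M ** N = mat 1" using assms unfolding invertible_def by blast
  have "adj2 a b M = adj2 a b M ** (M ** N)" using N by simp
  also have "\<dots> = (adj2 a b M ** M) ** N" by (simp add: matrix_mul_assoc)
  also have "\<dots> = 0" using adj_mul(2) d by simp
  finally have z: "adj2 a b M = 0" .
  have "M = 0" using z ab unfolding mat2_eq by (auto simp: adj2_def vec_eq_iff)
  then have "(mat 1 :: real^'n^'n) = 0" using N by simp
  then have "(mat 1 :: real^'n^'n) $ a $ a = 0" by simp
  then show False by (simp add: mat_def)
qed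

lemma adjinv:
  assumes "det2 a b M \<noteq> 0" shows "(M :: real^'n^'n) ** ((1 / det2 a b M) *\<^sub>R adj2 a b M) = mat 1"
    using assms by (simp add: matrix_scalar_ac scalar_matrix_assoc[symmetric] adj_mul)

lemma inv2:
  assumes "det2 a b M \<noteq> 0" shows "matrix_inv (M :: real^'n^'n) = (1 / det2 a b M) *\<^sub>R adj2 a b M"
  by (rule inv_unique[OF adjinv[OF assms]])

context
  fixes U :: "(real^'n) set" and J h :: "real^'n \<Rightarrow> real^'n^'n"
  assumes AN: "almost_norden U J h"
begin

lemma hinv_det: "p \<in> U \<Longrightarrow> det2 a b (h p) \<noteq> 0"
  using det2_nz hdet[OF AN] invertible_det_nz by blast

lemma hinv_eq: "p \<in> U \<Longrightarrow> matrix_inv (h p) = (1 / det2 a b (h p)) *\<^sub>R adj2 a b (h p)"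
  using inv2 hinv_det by blast

lemma hinv_mul: "p \<in> U \<Longrightarrow> h p ** matrix_inv (h p) = mat 1" "p \<in> U \<Longrightarrow> matrix_inv (h p) ** h p = mat 1"
proof -
  assume p: "p \<in> U"
  show 1: "h p ** matrix_inv (h p) = mat 1" using hinv_eq[OF p] adjinv[OF hinv_det[OF p]] by simp
  then show "matrix_inv (h p) ** h p = mat 1" using matrix_left_right_inverse by blast
qed

lemma hinv_diff: "p \<in> U \<Longrightarrow> (\<lambda>q. matrix_inv (h q) $ i $ j) differentiable (at p)"
proof -
  assume p: "p \<in> U"
  let ?g = "\<lambda>q. (if i = j then (if i = a then h q $ b $ b else h q $ a $ a) else - h q $ i $ j) / det2 a b (h q)"
  have e: "\<And>q. q \<in> U \<Longrightarrow> ?g q = matrix_inv (h q) $ i $ j"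
    using hinv_eq by (simp add: adj2_def)
  have dh: "(\<lambda>q. h q $ k $ l) differentiable (at p)" for k l using C2h[OF AN] p by (rule C2_diffI)
  have dd: "(\<lambda>q. det2 a b (h q)) differentiable (at p)"
    unfolding det2_def using dh by (intro differentiable_diff differentiable_mult) auto
  have dn: "(\<lambda>q. (if i = j then (if i = a then h q $ b $ b else h q $ a $ a) else - h q $ i $ j)) differentiable (at p)"
    using dh by (cases "i = j"; cases "i = a") (auto intro: differentiable_minus)
  have "?g differentiable (at p)" using dn dd hinv_det[OF p] by (intro differentiable_divide) auto
  from diff_local[OF openU[OF AN] p, of ?g "\<lambda>q. matrix_inv (h q) $ i $ j", OF e this] show ?thesis by simp
qed

end
end

definition Aext :: "(real^'n \<Rightarrow> real^'n^'n) \<Rightarrow> (real^'n \<Rightarrow> real^'n^'n) \<Rightarrow> real^('n::finite option) \<Rightarrow> real^'n^'n" where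
  "Aext J h y = cos (2 * tco y) *\<^sub>R h (pco y) - sin (2 * tco y) *\<^sub>R (h (pco y) ** J (pco y))"

definition Xm :: "(real^'n \<Rightarrow> real^'n^'n) \<Rightarrow> (real^'n \<Rightarrow> real^'n^'n) \<Rightarrow> real^('n::finite option) \<Rightarrow> real^'n^'n" where
  "Xm J h y = (cos (2 * tco y) *\<^sub>R mat 1 + sin (2 * tco y) *\<^sub>R J (pco y)) ** matrix_inv (h (pco y))"

definition Minv :: "(real^'n \<Rightarrow> real^'n^'n) \<Rightarrow> (real^'n \<Rightarrow> real^'n^'n) \<Rightarrow> real^('n::finite option) \<Rightarrow> real^('n option)^('n option)" where
  "Minv J h y = (\<chi> i j. case (i, j) of (None, None) \<Rightarrow> 1 | (Some i, Some j) \<Rightarrow> Xm J h y $ i $ j | _ \<Rightarrow> 0)"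

lemma G_SS': "ext_metric J h y $ Some i $ Some j = Aext J h y $ i $ j"
  by (simp add: G_SS Aext_def)

lemma Minv_simps: "Minv J h y $ None $ None = 1" "Minv J h y $ None $ Some j = 0"
  "Minv J h y $ Some i $ None = 0" "Minv J h y $ Some i $ Some j = Xm J h y $ i $ j"
  by (simp_all add: Minv_def)

lemma PQ_alg:
  fixes cc ss pp qq rr tt :: real
  assumes "pp * pp + qq * rr = -1" "pp * qq + qq * tt = 0" "rr * pp + tt * rr = 0" "rr * qq + tt * tt = -1" "cc * cc + ss * ss = 1"
  shows "(cc - ss * pp) * (cc + ss * pp) + (- (ss * qq)) * (ss * rr) = 1"
    "(cc - ss * pp) * (ss * qq) + (- (ss * qq)) * (cc + ss * tt) = 0"
    "(- (ss * rr)) * (cc + ss * pp) + (cc - ss * tt) * (ss * rr) = 0"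
    "(- (ss * rr)) * (ss * qq) + (cc - ss * tt) * (cc + ss * tt) = 1"
  using assms by algebra+

lemma Xm_entry: "Xm J h y $ i $ j = cos (2 * tco y) * matrix_inv (h (pco y)) $ i $ j
    + sin (2 * tco y) * (J (pco y) ** matrix_inv (h (pco y))) $ i $ j"
proof -
  have "Xm J h y $ i $ j = (\<Sum>k\<in>UNIV. cos (2 * tco y) * ((if i = k then 1 else 0) * matrix_inv (h (pco y)) $ k $ j)
       + sin (2 * tco y) * (J (pco y) $ i $ k * matrix_inv (h (pco y)) $ k $ j))"
    unfolding Xm_def mm_nth by (simp add: mat_def algebra_simps)
  also have "\<dots> = cos (2 * tco y) * matrix_inv (h (pco y)) $ i $ j
    + sin (2 * tco y) * (J (pco y) ** matrix_inv (h (pco y))) $ i $ j"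
    by (simp add: sum.distrib sum_distrib_left[symmetric] sum_delta_mult mm_nth)
  finally show ?thesis .
qed

context
  fixes a b :: "'n::finite"
  assumes ab: "a \<noteq> b" and U2: "(UNIV :: 'n set) = {a, b}"
begin

context
  fixes U :: "(real^'n) set" and J h :: "real^'n \<Rightarrow> real^'n^'n"
  assumes AN: "almost_norden U J h"
begin

lemma JJe: "p \<in> U \<Longrightarrow> J p $ i $ a * J p $ a $ j + J p $ i $ b * J p $ b $ j = (if i = j then -1 else 0)"
proof -
  assume p: "p \<in> U"
  have "(J p ** J p) $ i $ j = (- mat 1 :: real^'n^'n) $ i $ j" using JJ[OF AN p] by simp
  then show ?thesis by (simp add: mm2[OF ab U2] mat_def)
qed

lemma PQ: "p \<in> U \<Longrightarrow> (c *\<^sub>R mat 1 - s *\<^sub>R J p) ** (c *\<^sub>R mat 1 + s *\<^sub>R J p) = mat 1"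
  if "c * c + s * s = 1"
proof -
  assume p: "p \<in> U"
  note e = JJe[OF p]
  have e1: "J p$a$a * J p$a$a + J p$a$b * J p$b$a = -1" using e[of a a] by simp
  have e2: "J p$a$a * J p$a$b + J p$a$b * J p$b$b = 0" using e[of a b] ab by simp
  have e3: "J p$b$a * J p$a$a + J p$b$b * J p$b$a = 0" using e[of b a] ab by simp
  have e4: "J p$b$a * J p$a$b + J p$b$b * J p$b$b = -1" using e[of b b] by simp
  note X = PQ_alg[OF e1 e2 e3 e4 that]
  show ?thesis unfolding mat2_eq[OF ab U2] mm2[OF ab U2] using ab X by (simp add: mat_def)
qed

lemma A_hP: "Aext J h y = h (pco y) ** (cos (2 * tco y) *\<^sub>R mat 1 - sin (2 * tco y) *\<^sub>R J (pco y))"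
  unfolding Aext_def mat2_eq[OF ab U2] using ab by (simp add: mm2[OF ab U2] mat_def algebra_simps)

lemma AX: "y \<in> ext_dom U \<Longrightarrow> Aext J h y ** Xm J h y = mat 1"
proof -
  assume y: "y \<in> ext_dom U"
  have p: "pco y \<in> U" using Epco[OF AN y] .
  let ?c = "cos (2 * tco y)" and ?s = "sin (2 * tco y)"
  have "Aext J h y ** Xm J h y = h (pco y) ** ((?c *\<^sub>R mat 1 - ?s *\<^sub>R J (pco y)) ** (?c *\<^sub>R mat 1 + ?s *\<^sub>R J (pco y))) ** matrix_inv (h (pco y))"
    unfolding A_hP Xm_def by (simp add: matrix_mul_assoc)
  also have "\<dots> = h (pco y) ** matrix_inv (h (pco y))"
    using PQ[OF _ p, of ?c ?s] by (simp add: sin_cos_squared_add3)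
  also have "\<dots> = mat 1" by (rule hinv_mul(1)[OF ab U2 AN p])
  finally show ?thesis .
qed

lemma GM: "y \<in> ext_dom U \<Longrightarrow> ext_metric J h y ** Minv J h y = mat 1"
proof -
  assume y: "y \<in> ext_dom U"
  have "(ext_metric J h y ** Minv J h y) $ i $ j = mat 1 $ i $ j" for i j
  proof -
    have "(ext_metric J h y ** Minv J h y) $ i $ j = ext_metric J h y $ i $ None * Minv J h y $ None $ j
       + (\<Sum>c\<in>UNIV. ext_metric J h y $ i $ Some c * Minv J h y $ Some c $ j)"
      by (simp add: mm_nth sumopt)
    also have "\<dots> = mat 1 $ i $ j"
    proof (cases i; cases j)
      fix i' j' assume "i = Some i'" "j = Some j'"
      moreover have "(\<Sum>c\<in>UNIV. Aext J h y $ i' $ c * Xm J h y $ c $ j') = mat 1 $ i' $ j'"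
        using AX[OF y] by (simp add: mm_nth[symmetric])
      ultimately show ?thesis by (simp add: G_SN G_SS' Minv_simps mat_def)
    qed (simp_all add: G_NN G_NS G_SN Minv_simps mat_def)
    finally show ?thesis .
  qed
  then show ?thesis by (simp add: vec_eq_iff)
qed

lemma ginv_eq: "y \<in> ext_dom U \<Longrightarrow> ginv (ext_metric J h) y = Minv J h y"
  unfolding ginv_def by (rule inv_unique[OF GM])

lemma G_tr: "y \<in> ext_dom U \<Longrightarrow> transpose (ext_metric J h y) = ext_metric J h y"
  using Gsym[OF AN] by (simp add: transpose_def vec_eq_iff)

lemma ginv_sym: "y \<in> ext_dom U \<Longrightarrow> ginv (ext_metric J h) y $ i $ j = ginv (ext_metric J h) y $ j $ i"
proof -
  assume y: "y \<in> ext_dom U"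
  have "transpose (ginv (ext_metric J h) y) = ginv (ext_metric J h) y"
    using inv_sym[OF GM[OF y] G_tr[OF y]] ginv_eq[OF y] by simp
  then have "transpose (ginv (ext_metric J h) y) $ j $ i = ginv (ext_metric J h) y $ j $ i" by simp
  then show ?thesis by (simp add: transpose_def)
qed

lemma ginv_inv: "y \<in> ext_dom U \<Longrightarrow> (\<Sum>l\<in>UNIV. ext_metric J h y $ w $ l * ginv (ext_metric J h) y $ l $ m) = (if w = m then 1 else 0)"
proof -
  assume y: "y \<in> ext_dom U"
  have "(ext_metric J h y ** ginv (ext_metric J h) y) $ w $ m = mat 1 $ w $ m" using GM[OF y] ginv_eq[OF y] by simp
  then show ?thesis by (simp add: mm_nth mat_def)
qed

lemma dXm: "y \<in> ext_dom U \<Longrightarrow> (\<lambda>z. Xm J h z $ i $ j) differentiable (at y)"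
proof -
  assume y: "y \<in> ext_dom U"
  have p: "pco y \<in> U" using Epco[OF AN y] .
  have f1: "(\<lambda>q. matrix_inv (h q) $ i $ j) differentiable (at (pco y))" by (rule hinv_diff[OF ab U2 AN p])
  have dJ: "(\<lambda>q. J q $ k $ l) differentiable (at (pco y))" for k l using C2J[OF AN] p by (rule C2_diffI)
  have f2: "(\<lambda>q. (J q ** matrix_inv (h q)) $ i $ j) differentiable (at (pco y))"
    unfolding mm_nth using dJ hinv_diff[OF ab U2 AN p] by (intro differentiable_sum differentiable_mult) auto
  have "(\<lambda>z. cos (2 * tco z) * matrix_inv (h (pco z)) $ i $ j + sin (2 * tco z) * (J (pco z) ** matrix_inv (h (pco z))) $ i $ j) differentiable (at y)"
    using pd_L(3)[where f="\<lambda>q. matrix_inv (h q) $ i $ j", OF f1 dcos2] pd_L(3)[where f="\<lambda>q. (J q ** matrix_inv (h q)) $ i $ j", OF f2 dsin2]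
    by (intro differentiable_add)
  then show ?thesis unfolding Xm_entry .
qed

lemma dGi: "y \<in> ext_dom U \<Longrightarrow> (\<lambda>z. ginv (ext_metric J h) z $ i $ j) differentiable (at y)"
proof -
  assume y: "y \<in> ext_dom U"
  have e: "\<And>z. z \<in> ext_dom U \<Longrightarrow> Minv J h z $ i $ j = ginv (ext_metric J h) z $ i $ j"
    using ginv_eq by simp
  have "(\<lambda>z. Minv J h z $ i $ j) differentiable (at y)"
  proof (cases i; cases j)
    fix i' j' assume "i = Some i'" "j = Some j'"
    then show ?thesis using dXm[OF y] by (simp add: Minv_simps)
  qed (simp_all add: Minv_simps)
  from diff_local[OF openE[OF AN] y, of "\<lambda>z. Minv J h z $ i $ j" "\<lambda>z. ginv (ext_metric J h) z $ i $ j", OF e this]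
  show ?thesis by simp
qed

lemma R4_anti2_ext: "x \<in> ext_dom U \<Longrightarrow> R4 (ext_metric J h) x X Y Z W = - R4 (ext_metric J h) x X Y W Z"
proof -
  assume x: "x \<in> ext_dom U"
  show ?thesis
  proof (rule R4_anti2_from_Rlow)
    fix i j k w
    show "Rlow (ext_metric J h) x i j k w = - Rlow (ext_metric J h) x i j w k"
      by (rule Rlow_anti2[OF openE[OF AN] x Gsym[OF AN] ginv_inv ginv_sym[OF x] dG[OF AN x] dGi[OF x] dpG[OF AN x] schwG[OF AN x]])
  qed
qed

end
end

lemma mat_diff_rdistrib: "((A :: real^'n::finite^'m) - B) ** C = A ** C - B ** C"
  by (simp add: mm_nth vec_eq_iff sum_subtractf algebra_simps)
lemma mat_add_rdistrib': "((A :: real^'n::finite^'m) + B) ** C = A ** C + B ** C"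
  by (simp add: mm_nth vec_eq_iff sum.distrib algebra_simps)

lemma Gam_kNN: "Gam (ext_metric J h) k None None = (\<lambda>y. 0)"
  by (rule ext) (simp add: Gam_def pdG_N1 pdG_N2)

lemma Gam_kSN: "Gam (ext_metric J h) k (Some a') None y =
   1/2 * (\<Sum>c\<in>UNIV. ginv (ext_metric J h) y $ k $ Some c * pd None (\<lambda>z. ext_metric J h z $ Some a' $ Some c) y)"
  unfolding Gam_def by (simp add: sumopt pdG_N1 pdG_N2)

lemma Gam_kNS: "Gam (ext_metric J h) k None (Some a') y =
   1/2 * (\<Sum>c\<in>UNIV. ginv (ext_metric J h) y $ k $ Some c * pd None (\<lambda>z. ext_metric J h z $ Some a' $ Some c) y)"
  unfolding Gam_def by (simp add: sumopt pdG_N1 pdG_N2)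

context
  fixes a b :: "'n::finite"
  assumes ab: "a \<noteq> b" and U2: "(UNIV :: 'n set) = {a, b}"
begin

context
  fixes U :: "(real^'n) set" and J h :: "real^'n \<Rightarrow> real^'n^'n"
  assumes AN: "almost_norden U J h"
begin

lemma AJ_eq: "p = pco y \<Longrightarrow> p \<in> U \<Longrightarrow> Aext J h y ** J p = cos (2 * tco y) *\<^sub>R (h p ** J p) + sin (2 * tco y) *\<^sub>R h p"
proof -
  assume py: "p = pco y" and p: "p \<in> U"
  let ?c = "cos (2 * tco y)" and ?s = "sin (2 * tco y)"
  have "Aext J h y ** J p = h p ** ((?c *\<^sub>R mat 1 - ?s *\<^sub>R J p) ** J p)"
    unfolding A_hP[OF ab U2 AN] py by (simp add: matrix_mul_assoc)
  also have "(?c *\<^sub>R mat 1 - ?s *\<^sub>R J p) ** J p = ?c *\<^sub>R J p + ?s *\<^sub>R mat 1"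
    unfolding mat_diff_rdistrib using JJ[OF AN p] by (simp add: scalar_matrix_assoc[symmetric])
  also have "h p ** (?c *\<^sub>R J p + ?s *\<^sub>R mat 1) = ?c *\<^sub>R (h p ** J p) + ?s *\<^sub>R h p"
    by (simp add: matrix_add_ldistrib matrix_scalar_ac scalar_matrix_assoc[symmetric])
  finally show ?thesis .
qed

lemma pdNG_AJ: "y \<in> ext_dom U \<Longrightarrow> pd None (\<lambda>z. ext_metric J h z $ Some i $ Some j) y = - 2 * (Aext J h y ** J (pco y)) $ j $ i"
proof -
  assume y: "y \<in> ext_dom U"
  have p: "pco y \<in> U" using Epco[OF AN y] .
  show ?thesis using pdG_SS(1)[OF AN y, of i j] AJ_eq[OF refl p] hsym[OF AN p, of i j] hJsym[OF AN p, of i j]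
    by (simp add: algebra_simps)
qed

lemma XAJ: "y \<in> ext_dom U \<Longrightarrow> Xm J h y ** (Aext J h y ** J (pco y)) = J (pco y)"
proof -
  assume y: "y \<in> ext_dom U"
  have "Xm J h y ** Aext J h y = mat 1" using AX[OF ab U2 AN y] matrix_left_right_inverse by blast
  then show ?thesis by (simp add: matrix_mul_assoc)
qed

lemma Gam_SSN: "y \<in> ext_dom U \<Longrightarrow> Gam (ext_metric J h) (Some d) (Some a') None y = - J (pco y) $ d $ a'"
proof -
  assume y: "y \<in> ext_dom U"
  have "Gam (ext_metric J h) (Some d) (Some a') None y = 1/2 * (\<Sum>c\<in>UNIV. Xm J h y $ d $ c * (- 2 * (Aext J h y ** J (pco y)) $ c $ a'))"
    unfolding Gam_kSN using pdNG_AJ[OF y] ginv_eq[OF ab U2 AN y] by (simp add: Minv_simps)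
  also have "\<dots> = - (\<Sum>c\<in>UNIV. Xm J h y $ d $ c * (Aext J h y ** J (pco y)) $ c $ a')"
    by (simp add: sum_distrib_left sum_negf)
  also have "\<dots> = - (Xm J h y ** (Aext J h y ** J (pco y))) $ d $ a'"
    by (simp only: mm_nth[of "Xm J h y" "Aext J h y ** J (pco y)"])
  also have "\<dots> = - J (pco y) $ d $ a'" using XAJ[OF y] by simp
  finally show ?thesis .
qed

lemma Gam_SNS: "y \<in> ext_dom U \<Longrightarrow> Gam (ext_metric J h) (Some d) None (Some a') y = - J (pco y) $ d $ a'"
  using Gam_SSN[of y d a'] by (simp add: Gam_kSN Gam_kNS)

lemma Rup_SSNN: "x \<in> ext_dom U \<Longrightarrow> Rup (ext_metric J h) (Some d) (Some a') None None x = (if d = a' then 1 else 0)"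
proof -
  assume x: "x \<in> ext_dom U"
  have p: "pco x \<in> U" using Epco[OF AN x] .
  let ?G = "ext_metric J h"
  have t1: "pd (Some a') (Gam ?G (Some d) None None) x = 0" unfolding Gam_kNN by (rule pd_const)
  have t2: "pd None (Gam ?G (Some d) (Some a') None) x = 0"
  proof -
    have "pd None (Gam ?G (Some d) (Some a') None) x = pd None (\<lambda>y. (\<lambda>q. - J q $ d $ a') (pco y)) x"
      using Gam_SSN by (intro pd_local[OF openE[OF AN] x]) auto
    also have "\<dots> = 0"
    proof (rule pd_lift(2))
      have "(\<lambda>q. J q $ d $ a') differentiable (at (pco x))" using C2J[OF AN] p by (rule C2_diffI)
      then show "(\<lambda>q. - J q $ d $ a') differentiable (at (pco x))" by (rule differentiable_minus)
    qed
    finally show ?thesis .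
  qed
  have t3: "(\<Sum>m\<in>UNIV. Gam ?G (Some d) (Some a') m x * Gam ?G m None None x - Gam ?G (Some d) None m x * Gam ?G m (Some a') None x)
       = - (\<Sum>c\<in>UNIV. J (pco x) $ d $ c * J (pco x) $ c $ a')"
    by (simp add: sumopt Gam_kNN Gam_SNS[OF x] Gam_SSN[OF x] sum_negf)
  have "(\<Sum>c\<in>UNIV. J (pco x) $ d $ c * J (pco x) $ c $ a') = (J (pco x) ** J (pco x)) $ d $ a'" by (simp add: mm_nth)
  also have "\<dots> = - (if d = a' then 1 else 0)" using JJ[OF AN p] by (simp add: mat_def)
  finally have t4: "(\<Sum>c\<in>UNIV. J (pco x) $ d $ c * J (pco x) $ c $ a') = - (if d = a' then 1 else 0)" .
  show ?thesis unfolding Rup_def using t1 t2 t3 t4 by simp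
qed

lemma Rlow_SNNS: "x \<in> ext_dom U \<Longrightarrow> Rlow (ext_metric J h) x (Some a') None None (Some b') = ext_metric J h x $ Some a' $ Some b'"
proof -
  assume x: "x \<in> ext_dom U"
  have "Rlow (ext_metric J h) x (Some a') None None (Some b') = (\<Sum>d\<in>UNIV. ext_metric J h x $ Some d $ Some b' * (if d = a' then 1 else 0))"
    unfolding Rlow_def by (simp add: sumopt G_NS Rup_SSNN[OF x])
  also have "\<dots> = ext_metric J h x $ Some a' $ Some b'"
    using sum_delta_mult[of a' "\<lambda>d. ext_metric J h x $ Some d $ Some b'"] by (simp add: mult.commute eq_commute)
  finally show ?thesis .
qed

end
end

lemma R4_axis2: "R4 G x (axis i 1) (axis j 1) Z W = (\<Sum>k\<in>UNIV. \<Sum>w\<in>UNIV. Z$k * W$w * Rlow G x i j k w)"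
  unfolding R4_expand by (simp add: sum_distrib_left[symmetric] sum_distrib_right[symmetric] mult.assoc sum_axis)

lemma R4_axis4: "R4 G x (axis i 1) (axis j 1) (axis k 1) (axis w 1) = Rlow G x i j k w"
  unfolding R4_axis2 by (simp add: sum_distrib_left[symmetric] sum_distrib_right[symmetric] mult.assoc sum_axis)

lemma phi_col: "(ext_phi J x *v axis j 1) $ w = (case (w, j) of (Some d, Some c) \<Rightarrow> J (pco x) $ d $ c | _ \<Rightarrow> 0)"
  unfolding mv_nth by (simp add: sum_axis' ext_phi_def)

definition eps :: "'n \<Rightarrow> 'n \<Rightarrow> 'n \<Rightarrow> real" where
  "eps a u v = (if u = v then 0 else if u = a then 1 else -1)"

context
  fixes a b :: "'n::finite"
  assumes ab: "a \<noteq> b" and U2: "(UNIV :: 'n set) = {a, b}"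
begin

context
  fixes U :: "(real^'n) set" and J h :: "real^'n \<Rightarrow> real^'n^'n"
  assumes AN: "almost_norden U J h"
begin

lemma Rlow_anti2_ext: "x \<in> ext_dom U \<Longrightarrow> Rlow (ext_metric J h) x i j k w = - Rlow (ext_metric J h) x i j w k"
  by (rule Rlow_anti2[OF openE[OF AN] _ Gsym[OF AN] ginv_inv[OF ab U2 AN] ginv_sym[OF ab U2 AN] dG[OF AN] dGi[OF ab U2 AN] dpG[OF AN] schwG[OF AN]])

lemma Rlow_zero: "x \<in> ext_dom U \<Longrightarrow> Rlow (ext_metric J h) x i i k w = 0" "x \<in> ext_dom U \<Longrightarrow> Rlow (ext_metric J h) x i j k k = 0"
  using Rlow_anti1[of "ext_metric J h" x i i k w] Rlow_anti2_ext[of x i j k k] by simp_all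

lemma Rlow_NSSN: "x \<in> ext_dom U \<Longrightarrow> Rlow (ext_metric J h) x None (Some e) (Some f) None = ext_metric J h x $ Some e $ Some f"
  using Rlow_anti1[of "ext_metric J h" x None "Some e" "Some f" None] Rlow_anti2_ext[of x "Some e" None "Some f" None]
    Rlow_SNNS[OF ab U2 AN, of x e f] by simp

lemma Rlow_hor: "x \<in> ext_dom U \<Longrightarrow> Rlow (ext_metric J h) x (Some e) (Some c) (Some m) (Some w) =
   Rlow (ext_metric J h) x (Some a) (Some b) (Some b) (Some a) * eps a e c * eps a w m"
proof -
  assume x: "x \<in> ext_dom U"
  note z = Rlow_zero[OF x]
  have s1: "Rlow (ext_metric J h) x (Some b) (Some a) m' w' = - Rlow (ext_metric J h) x (Some a) (Some b) m' w'" for m' w'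
    by (rule Rlow_anti1)
  have s2: "Rlow (ext_metric J h) x i' j' (Some a) (Some b) = - Rlow (ext_metric J h) x i' j' (Some b) (Some a)" for i' j'
    by (rule Rlow_anti2_ext[OF x])
  show ?thesis
    using two[OF ab U2, of e] two[OF ab U2, of c] two[OF ab U2, of m] two[OF ab U2, of w] ab
    by (auto simp: eps_def z s1 s2)
qed

end
end

lemma R4_zero3: "R4 G x X Y 0 W = 0"
  unfolding R4_expand by simp

lemma R4_axis3: "R4 G x (axis i 1) (axis j 1) (axis k 1) W = (\<Sum>w\<in>UNIV. W$w * Rlow G x i j k w)"
  unfolding R4_axis2 by (simp add: sum_distrib_left[symmetric] sum_distrib_right[symmetric] mult.assoc sum_axis)

lemma phi_None: "ext_phi J x *v axis None 1 = 0"
  by (simp add: vec_eq_iff phi_col split: option.split)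

lemma phi_Some_sum: "(\<Sum>w\<in>UNIV. (ext_phi J x *v axis (Some f) 1) $ w * F w) = (\<Sum>g\<in>UNIV. J (pco x) $ g $ f * F (Some g))"
  by (simp add: sumopt phi_col)

context
  fixes a b :: "'n::finite"
  assumes ab: "a \<noteq> b" and U2: "(UNIV :: 'n set) = {a, b}"
begin

context
  fixes U :: "(real^'n) set" and J h :: "real^'n \<Rightarrow> real^'n^'n"
  assumes AN: "almost_norden U J h"
begin

lemma blocksum: "x \<in> ext_dom U \<Longrightarrow> (\<Sum>i\<in>UNIV. \<Sum>j\<in>UNIV. ginv (ext_metric J h) x $ i $ j * F i j)
   = F None None + (\<Sum>c\<in>UNIV. \<Sum>d\<in>UNIV. Xm J h x $ c $ d * F (Some c) (Some d))"
  unfolding ginv_eq[OF ab U2 AN] by (simp add: sumopt Minv_simps)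

lemma rho_eq: "x \<in> ext_dom U \<Longrightarrow> rho (ext_metric J h) x (axis i 1) (axis j 1) =
   Rlow (ext_metric J h) x None i j None + (\<Sum>e\<in>UNIV. \<Sum>f\<in>UNIV. Xm J h x $ e $ f * Rlow (ext_metric J h) x (Some e) i j (Some f))"
  unfolding rho_def R4_axis4 by (rule blocksum)

lemma tau_eq: "x \<in> ext_dom U \<Longrightarrow> tau (ext_metric J h) x =
   (\<Sum>e\<in>UNIV. \<Sum>f\<in>UNIV. Xm J h x $ e $ f * Aext J h x $ e $ f)
   + (\<Sum>c\<in>UNIV. \<Sum>d\<in>UNIV. Xm J h x $ c $ d * Aext J h x $ c $ d)
   + (\<Sum>c\<in>UNIV. \<Sum>d\<in>UNIV. Xm J h x $ c $ d * (\<Sum>e\<in>UNIV. \<Sum>f\<in>UNIV. Xm J h x $ e $ f * Rlow (ext_metric J h) x (Some e) (Some c) (Some d) (Some f)))"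
proof -
  assume x: "x \<in> ext_dom U"
  have "tau (ext_metric J h) x = rho (ext_metric J h) x (axis None 1) (axis None 1)
     + (\<Sum>c\<in>UNIV. \<Sum>d\<in>UNIV. Xm J h x $ c $ d * rho (ext_metric J h) x (axis (Some c) 1) (axis (Some d) 1))"
    unfolding tau_def by (rule blocksum[OF x])
  then show ?thesis unfolding rho_eq[OF x]
    by (simp add: Rlow_zero[OF ab U2 AN x] Rlow_SNNS[OF ab U2 AN x] Rlow_NSSN[OF ab U2 AN x] G_SS' sum.distrib distrib_left)
qed

lemma rhostar_eq: "x \<in> ext_dom U \<Longrightarrow> rhostar (ext_metric J h) (ext_phi J) x (axis k 1) Z =
   (\<Sum>e\<in>UNIV. \<Sum>f\<in>UNIV. Xm J h x $ e $ f * R4 (ext_metric J h) x (axis (Some e) 1) (axis k 1) Z (ext_phi J x *v axis (Some f) 1))"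
proof -
  assume x: "x \<in> ext_dom U"
  show ?thesis unfolding rhostar_def by (subst blocksum[OF x]) (simp add: phi_None R4_expand)
qed

end
end

context
  fixes a b :: "'n::finite"
  assumes ab: "a \<noteq> b" and U2: "(UNIV :: 'n set) = {a, b}"
begin

context
  fixes U :: "(real^'n) set" and J h :: "real^'n \<Rightarrow> real^'n^'n"
  assumes AN: "almost_norden U J h"
begin

lemma rhostar_ax: "x \<in> ext_dom U \<Longrightarrow> rhostar (ext_metric J h) (ext_phi J) x (axis k 1) (axis l 1) =
   (\<Sum>e\<in>UNIV. \<Sum>f\<in>UNIV. Xm J h x $ e $ f * (\<Sum>g\<in>UNIV. J (pco x) $ g $ f * Rlow (ext_metric J h) x (Some e) k l (Some g)))"
  by (simp add: rhostar_eq[OF ab U2 AN] R4_axis3 phi_Some_sum)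

lemma taustar_eq: "x \<in> ext_dom U \<Longrightarrow> taustar (ext_metric J h) (ext_phi J) x =
   (\<Sum>e\<in>UNIV. \<Sum>f\<in>UNIV. Xm J h x $ e $ f * (\<Sum>g\<in>UNIV. J (pco x) $ g $ f * Aext J h x $ e $ g))
   + (\<Sum>c\<in>UNIV. \<Sum>d\<in>UNIV. Xm J h x $ c $ d * (\<Sum>e\<in>UNIV. \<Sum>f\<in>UNIV. Xm J h x $ e $ f *
        (\<Sum>g\<in>UNIV. J (pco x) $ g $ f * Rlow (ext_metric J h) x (Some e) (Some c) (Some d) (Some g))))"
proof -
  assume x: "x \<in> ext_dom U"
  have "taustar (ext_metric J h) (ext_phi J) x = rhostar (ext_metric J h) (ext_phi J) x (axis None 1) (axis None 1)
     + (\<Sum>c\<in>UNIV. \<Sum>d\<in>UNIV. Xm J h x $ c $ d * rhostar (ext_metric J h) (ext_phi J) x (axis (Some c) 1) (axis (Some d) 1))"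
    unfolding taustar_def by (rule blocksum[OF ab U2 AN x])
  then show ?thesis unfolding rhostar_ax[OF x] by (simp add: Rlow_SNNS[OF ab U2 AN x] G_SS')
qed

lemma taustarstar_eq: "x \<in> ext_dom U \<Longrightarrow> taustarstar (ext_metric J h) (ext_phi J) x =
   (\<Sum>c\<in>UNIV. \<Sum>d\<in>UNIV. Xm J h x $ c $ d * (\<Sum>e\<in>UNIV. \<Sum>f\<in>UNIV. Xm J h x $ e $ f *
        (\<Sum>m\<in>UNIV. J (pco x) $ m $ d * (\<Sum>w\<in>UNIV. J (pco x) $ w $ f * Rlow (ext_metric J h) x (Some e) (Some c) (Some m) (Some w)))))"
proof -
  assume x: "x \<in> ext_dom U"
  have "taustarstar (ext_metric J h) (ext_phi J) x = rhostar (ext_metric J h) (ext_phi J) x (axis None 1) (ext_phi J x *v axis None 1)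
     + (\<Sum>c\<in>UNIV. \<Sum>d\<in>UNIV. Xm J h x $ c $ d * rhostar (ext_metric J h) (ext_phi J) x (axis (Some c) 1) (ext_phi J x *v axis (Some d) 1))"
    unfolding taustarstar_def by (rule blocksum[OF ab U2 AN x])
  moreover have "rhostar (ext_metric J h) (ext_phi J) x (axis None 1) (ext_phi J x *v axis None 1) = 0"
    unfolding rhostar_eq[OF ab U2 AN x] phi_None R4_zero3 by simp
  moreover have rs: "rhostar (ext_metric J h) (ext_phi J) x (axis (Some c) 1) (ext_phi J x *v axis (Some d) 1)
     = (\<Sum>e\<in>UNIV. \<Sum>f\<in>UNIV. Xm J h x $ e $ f *
        (\<Sum>m\<in>UNIV. J (pco x) $ m $ d * (\<Sum>w\<in>UNIV. J (pco x) $ w $ f * Rlow (ext_metric J h) x (Some e) (Some c) (Some m) (Some w))))" for c d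
    unfolding rhostar_eq[OF ab U2 AN x] R4_axis2
    by (simp add: sum_distrib_left[symmetric] sum_distrib_right[symmetric] mult.assoc phi_Some_sum)
  ultimately show ?thesis by (simp only: rs add_0_left)
qed

end
end

lemma J_trdet:
  fixes p q r t :: real
  assumes "p * p + q * r = -1" "p * q + q * t = 0" "r * p + t * r = 0" "r * q + t * t = -1"
  shows "p + t = 0" "p * t - q * r = 1"
proof -
  have q: "q \<noteq> 0"
  proof
    assume "q = 0" then have "p * p = -1" using assms(1) by simp
    moreover have "p * p \<ge> 0" by simp
    ultimately show False by simp
  qed
  have "q * (p + t) = 0" using assms(2) by (simp add: algebra_simps)
  then show pt: "p + t = 0" using q by simp
  then have "t = - p" by simp
  then show "p * t - q * r = 1" using assms(1) by (simp add: algebra_simps)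
qed

context
  fixes a b :: "'n::finite"
  assumes ab: "a \<noteq> b" and U2: "(UNIV :: 'n set) = {a, b}"
begin

context
  fixes U :: "(real^'n) set" and J h :: "real^'n \<Rightarrow> real^'n^'n"
  assumes AN: "almost_norden U J h"
begin

lemma Bsym: "x \<in> ext_dom U \<Longrightarrow> Xm J h x $ c $ d = Xm J h x $ d $ c"
  using ginv_sym[OF ab U2 AN, of x "Some c" "Some d"] ginv_eq[OF ab U2 AN, of x] by (simp add: Minv_simps)

lemma Asym: "x \<in> ext_dom U \<Longrightarrow> Aext J h x $ c $ d = Aext J h x $ d $ c"
  using Gsym[OF AN, of x "Some c" "Some d"] by (simp add: G_SS')

lemma ABe: "x \<in> ext_dom U \<Longrightarrow> Aext J h x $ i $ a * Xm J h x $ a $ j + Aext J h x $ i $ b * Xm J h x $ b $ j = (if i = j then 1 else 0)"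
proof -
  assume x: "x \<in> ext_dom U"
  have "(Aext J h x ** Xm J h x) $ i $ j = mat 1 $ i $ j" using AX[OF ab U2 AN x] by simp
  then show ?thesis by (simp add: mm2[OF ab U2] mat_def)
qed

lemma Jtd: "x \<in> ext_dom U \<Longrightarrow> J (pco x) $ a $ a + J (pco x) $ b $ b = 0"
   "x \<in> ext_dom U \<Longrightarrow> J (pco x) $ a $ a * J (pco x) $ b $ b - J (pco x) $ a $ b * J (pco x) $ b $ a = 1"
proof -
  assume x: "x \<in> ext_dom U"
  have p: "pco x \<in> U" using Epco[OF AN x] .
  note e = JJe[OF ab U2 AN p]
  have e1: "J (pco x)$a$a * J (pco x)$a$a + J (pco x)$a$b * J (pco x)$b$a = -1" using e[of a a] by simp
  have e2: "J (pco x)$a$a * J (pco x)$a$b + J (pco x)$a$b * J (pco x)$b$b = 0" using e[of a b] ab by simp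
  have e3: "J (pco x)$b$a * J (pco x)$a$a + J (pco x)$b$b * J (pco x)$b$a = 0" using e[of b a] ab by simp
  have e4: "J (pco x)$b$a * J (pco x)$a$b + J (pco x)$b$b * J (pco x)$b$b = -1" using e[of b b] by simp
  show "J (pco x) $ a $ a + J (pco x) $ b $ b = 0"
     "J (pco x) $ a $ a * J (pco x) $ b $ b - J (pco x) $ a $ b * J (pco x) $ b $ a = 1"
    using J_trdet[OF e1 e2 e3 e4] by simp_all
qed

lemma taustar_zero: "x \<in> ext_dom U \<Longrightarrow> taustar (ext_metric J h) (ext_phi J) x = 0"
proof -
  assume x: "x \<in> ext_dom U"
  have B: "Xm J h x $ b $ a = Xm J h x $ a $ b" using Bsym[OF x] .
  have A: "Aext J h x $ b $ a = Aext J h x $ a $ b" using Asym[OF x] .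
  have E1: "Aext J h x $ a $ a * Xm J h x $ a $ a + Aext J h x $ a $ b * Xm J h x $ b $ a = 1" using ABe[OF x, of a a] by simp
  have E2: "Aext J h x $ b $ a * Xm J h x $ a $ b + Aext J h x $ b $ b * Xm J h x $ b $ b = 1" using ABe[OF x, of b b] by simp
  have E3: "Aext J h x $ a $ a * Xm J h x $ a $ b + Aext J h x $ a $ b * Xm J h x $ b $ b = 0" using ABe[OF x, of a b] ab by simp
  have E4: "Aext J h x $ b $ a * Xm J h x $ a $ a + Aext J h x $ b $ b * Xm J h x $ b $ a = 0" using ABe[OF x, of b a] ab by simp
  note T = Jtd[OF x]
  define Q where "Q = Rlow (ext_metric J h) x (Some a) (Some b) (Some b) (Some a)"
  have H: "Rlow (ext_metric J h) x (Some e) (Some c) (Some m) (Some w) = Q * eps a e c * eps a w m" for e c m w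
    unfolding Q_def by (rule Rlow_hor[OF ab U2 AN x])
  show ?thesis
    unfolding taustar_eq[OF ab U2 AN x]
    apply (simp add: sum2[OF ab U2] H eps_def ab ab[symmetric] B A)
    using E1 E2 E3 E4 T B A by algebra
qed

lemma taustarstar_tau: "x \<in> ext_dom U \<Longrightarrow> taustarstar (ext_metric J h) (ext_phi J) x = tau (ext_metric J h) x - 4"
proof -
  assume x: "x \<in> ext_dom U"
  have B: "Xm J h x $ b $ a = Xm J h x $ a $ b" using Bsym[OF x] .
  have A: "Aext J h x $ b $ a = Aext J h x $ a $ b" using Asym[OF x] .
  have E1: "Aext J h x $ a $ a * Xm J h x $ a $ a + Aext J h x $ a $ b * Xm J h x $ b $ a = 1" using ABe[OF x, of a a] by simp
  have E2: "Aext J h x $ b $ a * Xm J h x $ a $ b + Aext J h x $ b $ b * Xm J h x $ b $ b = 1" using ABe[OF x, of b b] by simp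
  note T = Jtd[OF x]
  define Q where "Q = Rlow (ext_metric J h) x (Some a) (Some b) (Some b) (Some a)"
  have H: "Rlow (ext_metric J h) x (Some e) (Some c) (Some m) (Some w) = Q * eps a e c * eps a w m" for e c m w
    unfolding Q_def by (rule Rlow_hor[OF ab U2 AN x])
  show ?thesis
    unfolding taustarstar_eq[OF ab U2 AN x] tau_eq[OF ab U2 AN x]
    apply (simp add: sum2[OF ab U2] H eps_def ab ab[symmetric] B A)
    using E1 E2 T B A by algebra
qed

end
end

lemma R4_lin1: "R4 G x (\<alpha> *\<^sub>R X + \<beta> *\<^sub>R X') Y Z W = \<alpha> * R4 G x X Y Z W + \<beta> * R4 G x X' Y Z W"
  unfolding R4_expand by (simp add: algebra_simps sum.distrib sum_distrib_left)

lemma R4_lin4: "R4 G x X Y Z (\<alpha> *\<^sub>R W + \<beta> *\<^sub>R W') = \<alpha> * R4 G x X Y Z W + \<beta> * R4 G x X Y Z W'"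
  unfolding R4_expand by (simp add: algebra_simps sum.distrib sum_distrib_left)

lemma gv_lin1: "gv G x (\<alpha> *\<^sub>R X + \<beta> *\<^sub>R X') Y = \<alpha> * gv G x X Y + \<beta> * gv G x X' Y"
  unfolding gv_def by (simp add: algebra_simps sum.distrib sum_distrib_left)

lemma R4_diag1: "R4 G x Y Y Z W = 0"
  using R4_anti1[of G x Y Y Z W] by simp

lemma sum_axis_mid: "(\<Sum>k\<in>UNIV. c k * (axis i 1 :: real^'n::finite) $ k * f k) = c i * f i"
  using sum_axis[of i "\<lambda>k. c k * f k"] by (simp add: algebra_simps)

lemma R4_axis14: "R4 G x (axis i 1) Y Z (axis w 1) = (\<Sum>j\<in>UNIV. \<Sum>k\<in>UNIV. Y$j * Z$k * Rlow G x i j k w)"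
proof -
  have "R4 G x (axis i 1) Y Z (axis w 1) = (\<Sum>i'\<in>UNIV. \<Sum>j\<in>UNIV. \<Sum>k\<in>UNIV.
      (axis i 1 :: real^_) $ i' * Y$j * Z$k * Rlow G x i' j k w)"
    unfolding R4_expand by (intro sum.cong refl) (rule sum_axis_mid)
  also have "\<dots> = (\<Sum>i'\<in>UNIV. (axis i 1 :: real^_) $ i' * (\<Sum>j\<in>UNIV. \<Sum>k\<in>UNIV. Y$j * Z$k * Rlow G x i' j k w))"
    by (simp add: sum_distrib_left mult.assoc)
  also have "\<dots> = (\<Sum>j\<in>UNIV. \<Sum>k\<in>UNIV. Y$j * Z$k * Rlow G x i j k w)" by (rule sum_axis)
  finally show ?thesis .
qed

lemma plane_alg:
  fixes R gx gy al be :: real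
  assumes h1: "al^2 * R = gy - (be * gy)^2" and h2: "be^2 * R = gx - (al * gx)^2" and one: "1 = al^2 * gx + be^2 * gy"
  shows "R = gx * gy"
proof -
  have k1: "al^2 * (R - gx * gy) = 0" using h1 one by algebra
  have k2: "be^2 * (R - gx * gy) = 0" using h2 one by algebra
  have "al \<noteq> 0 \<or> be \<noteq> 0" using one by auto
  then show ?thesis using k1 k2 by auto
qed

context
  fixes a b :: "'n::finite"
  assumes ab: "a \<noteq> b" and U2: "(UNIV :: 'n set) = {a, b}"
begin

context
  fixes U :: "(real^'n) set" and J h :: "real^'n \<Rightarrow> real^'n^'n"
  assumes AN: "almost_norden U J h"
begin

lemma gv_sym: "x \<in> ext_dom U \<Longrightarrow> gv (ext_metric J h) x X Y = gv (ext_metric J h) x Y X"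
  unfolding gv_def using Gsym[OF AN]
  by (subst sum.swap) (simp add: algebra_simps)

lemma gv_xi: "gv (ext_metric J h) x ext_xi V = V $ None"
  unfolding ext_xi_def gv_axis by (simp add: sumopt G_NN G_NS)

lemma gv_UU: "gv (ext_metric J h) x V V = (V $ None)^2 + (\<Sum>i\<in>UNIV. \<Sum>j\<in>UNIV. V $ Some i * V $ Some j * ext_metric J h x $ Some i $ Some j)"
  unfolding gv_def by (simp add: sumopt G_NN G_NS G_SN power2_eq_square algebra_simps)

lemma Hxi: "x \<in> ext_dom U \<Longrightarrow> R4 (ext_metric J h) x ext_xi V V ext_xi = gv (ext_metric J h) x V V - (gv (ext_metric J h) x ext_xi V)^2"
proof -
  assume x: "x \<in> ext_dom U"
  have "R4 (ext_metric J h) x ext_xi V V ext_xi = (\<Sum>j\<in>UNIV. \<Sum>k\<in>UNIV. V$j * V$k * Rlow (ext_metric J h) x None j k None)"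
    unfolding ext_xi_def by (rule R4_axis14)
  also have "\<dots> = (\<Sum>i\<in>UNIV. \<Sum>j\<in>UNIV. V $ Some i * V $ Some j * ext_metric J h x $ Some i $ Some j)"
    by (simp add: sumopt Rlow_zero[OF ab U2 AN x] Rlow_NSSN[OF ab U2 AN x])
  finally show ?thesis unfolding gv_UU gv_xi by simp
qed

lemma sec_xi:
  assumes x: "x \<in> ext_dom U"
    and o: "gv (ext_metric J h) x X Y = 0"
    and nz: "gv (ext_metric J h) x X X * gv (ext_metric J h) x Y Y \<noteq> 0"
    and xi: "ext_xi = \<alpha> *\<^sub>R X + \<beta> *\<^sub>R Y"
  shows "R4 (ext_metric J h) x X Y Y X / (gv (ext_metric J h) x X X * gv (ext_metric J h) x Y Y) = 1"
proof -
  let ?R = "R4 (ext_metric J h) x" and ?g = "gv (ext_metric J h) x"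
  have o': "?g Y X = 0" using o gv_sym[OF x] by simp
  have gxx: "?g ext_xi ext_xi = 1" unfolding gv_xi by (simp add: ext_xi_def)
  have anti2: "?R P1 P2 P3 P4 = - ?R P1 P2 P4 P3" for P1 P2 P3 P4 by (rule R4_anti2_ext[OF ab U2 AN x])
  have d2: "?R P1 P2 P3 P3 = 0" for P1 P2 P3 using anti2[of P1 P2 P3 P3] by simp
  have sw: "?R Y X X Y = ?R X Y Y X" using R4_anti1[of "ext_metric J h" x Y X X Y] anti2[of X Y X Y] by simp
  have e1: "?R ext_xi Y Y ext_xi = \<alpha>^2 * ?R X Y Y X"
    unfolding xi R4_lin1 R4_lin4 by (simp add: R4_diag1 d2 power2_eq_square)
  have e2: "?R ext_xi X X ext_xi = \<beta>^2 * ?R Y X X Y"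
    unfolding xi R4_lin1 R4_lin4 by (simp add: R4_diag1 d2 power2_eq_square)
  have gY: "?g ext_xi Y = \<beta> * ?g Y Y" unfolding xi gv_lin1 using o by simp
  have gX: "?g ext_xi X = \<alpha> * ?g X X" unfolding xi gv_lin1 using o' by simp
  have one: "1 = \<alpha>^2 * ?g X X + \<beta>^2 * ?g Y Y"
  proof -
    have "?g ext_xi ext_xi = \<alpha> * ?g X ext_xi + \<beta> * ?g Y ext_xi" unfolding xi gv_lin1 ..
    also have "?g X ext_xi = \<alpha> * ?g X X" using gX gv_sym[OF x] by simp
    also have "?g Y ext_xi = \<beta> * ?g Y Y" using gY gv_sym[OF x] by simp
    finally show ?thesis using gxx by (simp add: power2_eq_square algebra_simps)
  qed
  have h1: "\<alpha>^2 * ?R X Y Y X = ?g Y Y - (\<beta> * ?g Y Y)^2" using Hxi[OF x, of Y] e1 gY by simp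
  have h2: "\<beta>^2 * ?R X Y Y X = ?g X X - (\<alpha> * ?g X X)^2" using Hxi[OF x, of X] e2 gX sw by simp
  have "?R X Y Y X = ?g X X * ?g Y Y" by (rule plane_alg[OF h1 h2 one])
  then show ?thesis using nz by simp
qed

end
end

theorem proposition4p5:
  fixes U :: "(real^'n::finite) set" and J h :: "real^'n \<Rightarrow> real^'n^'n" and k' :: real
  assumes "CARD('n) = 2"
    and "almost_norden U J h"
    and "const_sec_curv U h k'"
  shows "(\<exists>c. \<forall>x\<in>ext_dom U. \<forall>X Y.
            gv (ext_metric J h) x X Y = 0 \<and>
            gv (ext_metric J h) x X X * gv (ext_metric J h) x Y Y \<noteq> 0 \<and>
            (\<exists>a b. ext_xi = a *\<^sub>R X + b *\<^sub>R Y) \<longrightarrow>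
            R4 (ext_metric J h) x X Y Y X /
              (gv (ext_metric J h) x X X * gv (ext_metric J h) x Y Y) = c)
       \<and> (\<forall>x\<in>ext_dom U. taustar (ext_metric J h) (ext_phi J) x = 0)
       \<and> (\<forall>x\<in>ext_dom U. taustarstar (ext_metric J h) (ext_phi J) x = tau (ext_metric J h) x - 4)"
proof -
  obtain a b :: 'n where U2: "(UNIV :: 'n set) = {a, b}" and ab: "a \<noteq> b"
    using assms(1) card_2_iff by metis
  note AN = assms(2)
  have part1: "\<forall>x\<in>ext_dom U. \<forall>X Y.
            gv (ext_metric J h) x X Y = 0 \<and>
            gv (ext_metric J h) x X X * gv (ext_metric J h) x Y Y \<noteq> 0 \<and>
            (\<exists>a b. ext_xi = a *\<^sub>R X + b *\<^sub>R Y) \<longrightarrow>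
            R4 (ext_metric J h) x X Y Y X /
              (gv (ext_metric J h) x X X * gv (ext_metric J h) x Y Y) = 1"
  proof (intro ballI allI impI)
    fix x X Y
    assume x: "x \<in> ext_dom U"
      and H: "gv (ext_metric J h) x X Y = 0 \<and>
            gv (ext_metric J h) x X X * gv (ext_metric J h) x Y Y \<noteq> 0 \<and>
            (\<exists>a b. ext_xi = a *\<^sub>R X + b *\<^sub>R Y)"
    then obtain \<alpha> \<beta> where xi: "ext_xi = \<alpha> *\<^sub>R X + \<beta> *\<^sub>R Y" by blast
    show "R4 (ext_metric J h) x X Y Y X /
              (gv (ext_metric J h) x X X * gv (ext_metric J h) x Y Y) = 1"
      using sec_xi[OF ab U2 AN x _ _ xi] H by blast
  qed
  show ?thesis
    using part1 taustar_zero[OF ab U2 AN] taustarstar_tau[OF ab U2 AN] by blast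
qed

end
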